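(* Let $d\ge 1$ and let $\Phi_1,\dots,\Phi_N:\mathcal L(\mathbb C^d)\to\mathcal L(\mathbb C^d)$ be quantum channels. Suppose there exist orthonormal bases $\mathbf e^{(1)},\dots,\mathbf e^{(N)}$ of $\mathbb C^d$ such that the value of the semidefinite program $$\min\Big\{\operatorname{Tr} H \;:\; H \text{ Hermitian on } \mathbb C^d\otimes\mathbb C^d,\ H\ge G_{\Phi_i,\mathbf e^{(i)}}\ \text{for all } i\in[N]\Big\}$$ is strictly larger than $d$. Then the $N$-tuple $(\Phi_1,\dots,\Phi_N)$ is incompatible.
   Context: A quantum channel is a completely positive trace-preserving linear map; $\Phi^*$ denotes its adjoint with respect to the Hilbert–Schmidt inner product $\langle X,Y\rangle=\operatorname{Tr}(X^*Y)$. Channels $\Phi_1,\dots,\Phi_N:\mathcal L(\mathbb C^d)\to\mathcal L(\mathbb C^d)$ are compatible if there is a channel $\Lambda:\mathcal L(\mathbb C^d)\to\mathcal L((\mathbb C^d)^{\otimes N})$ whose marginals are the $\Phi_i$, i.e. $\Phi_i(X)$ equals the partial trace of $\Lambda(X)$ over all tensor factors except the $i$-th, for every $X$; otherwise they are incompatible. For an operator $X=\sum_{i,j}X_{ij}|i\rangle\langle j|$ on $\mathbb C^d$, let $|X\rangle:=\sum_{i,j}X_{ij}|i\rangle\otimes|j\rangle\in\mathbb C^d\otimes\mathbb C^d$. For a channel $\Phi$ on $\mathcal L(\mathbb C^d)$ and an orthonormal basis $\mathbf e=(e_i)_{i=1}^d$, define $$G_{\Phi,\mathbf e}:=\sum_{i=1}^d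 \frac{|\Phi^*(|e_i\rangle\langle e_i|)\rangle\langle\Phi^*(|e_i\rangle\langle e_i|)|}{\operatorname{Tr}\Phi^*(|e_i\rangle\langle e_i|)},$$ where terms with zero denominator are omitted. $H\ge G$ is the positive semidefinite order. *)

theory Defs
  imports Complex_Main "Jordan_Normal_Form.Matrix"
begin

text \<open>Operators on C^n are complex n x n matrices (type complex mat, with carrier_mat n n).
  A linear map L(C^n) -> L(C^m) is a function complex mat => complex mat, considered on
  carrier_mat n n only.\<close>

definition mtrace :: "complex mat \<Rightarrow> complex" where
  "mtrace A = (\<Sum>i<dim_row A. A $$ (i, i))"

definition cadj :: "complex mat \<Rightarrow> complex mat" where
  "cadj A = mat (dim_col A) (dim_row A) (\<lambda>(i, j). cnj (A $$ (j, i)))"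

definition cinner :: "complex vec \<Rightarrow> complex vec \<Rightarrow> complex" where
  "cinner v w = (\<Sum>i<dim_vec v. cnj (v $ i) * w $ i)"

definition hermitian_mat :: "nat \<Rightarrow> complex mat \<Rightarrow> bool" where
  "hermitian_mat n A \<longleftrightarrow> A \<in> carrier_mat n n \<and> cadj A = A"

definition psd_mat :: "nat \<Rightarrow> complex mat \<Rightarrow> bool" where
  "psd_mat n A \<longleftrightarrow> hermitian_mat n A \<and>
     (\<forall>v \<in> carrier_vec n. 0 \<le> Re (cinner v (A *\<^sub>v v)))"

definition loewner_ge :: "nat \<Rightarrow> complex mat \<Rightarrow> complex mat \<Rightarrow> bool" where
  "loewner_ge n H G \<longleftrightarrow> H \<in> carrier_mat n n \<and> G \<in> carrier_mat n n \<and> psd_mat n (H - G)"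

definition linear_op_map :: "nat \<Rightarrow> nat \<Rightarrow> (complex mat \<Rightarrow> complex mat) \<Rightarrow> bool" where
  "linear_op_map n m \<Phi> \<longleftrightarrow>
     (\<forall>X \<in> carrier_mat n n. \<Phi> X \<in> carrier_mat m m) \<and>
     (\<forall>X \<in> carrier_mat n n. \<forall>Y \<in> carrier_mat n n. \<Phi> (X + Y) = \<Phi> X + \<Phi> Y) \<and>
     (\<forall>X \<in> carrier_mat n n. \<forall>c. \<Phi> (c \<cdot>\<^sub>m X) = c \<cdot>\<^sub>m \<Phi> X)"

text \<open>Block (a,b) (of size n x n) of a (k*n) x (k*n) matrix, i.e. C^k (x) C^n with the
  C^k index most significant.\<close>
definition block_of :: "nat \<Rightarrow> nat \<Rightarrow> nat \<Rightarrow> complex mat \<Rightarrow> complex mat" where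
  "block_of n a b X = mat n n (\<lambda>(r, s). X $$ (a * n + r, b * n + s))"

text \<open>(id_k (x) Phi)(X) for Phi : L(C^n) -> L(C^m), X on C^k (x) C^n.\<close>
definition ampliate :: "nat \<Rightarrow> nat \<Rightarrow> nat \<Rightarrow> (complex mat \<Rightarrow> complex mat) \<Rightarrow> complex mat \<Rightarrow> complex mat" where
  "ampliate k n m \<Phi> X = mat (k * m) (k * m)
     (\<lambda>(p, q). \<Phi> (block_of n (p div m) (q div m) X) $$ (p mod m, q mod m))"

definition completely_positive :: "nat \<Rightarrow> nat \<Rightarrow> (complex mat \<Rightarrow> complex mat) \<Rightarrow> bool" where
  "completely_positive n m \<Phi> \<longleftrightarrow>
     (\<forall>k X. psd_mat (k * n) X \<longrightarrow> psd_mat (k * m) (ampliate k n m \<Phi> X))"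

definition trace_preserving :: "nat \<Rightarrow> (complex mat \<Rightarrow> complex mat) \<Rightarrow> bool" where
  "trace_preserving n \<Phi> \<longleftrightarrow> (\<forall>X \<in> carrier_mat n n. mtrace (\<Phi> X) = mtrace X)"

definition quantum_channel :: "nat \<Rightarrow> nat \<Rightarrow> (complex mat \<Rightarrow> complex mat) \<Rightarrow> bool" where
  "quantum_channel n m \<Phi> \<longleftrightarrow>
     linear_op_map n m \<Phi> \<and> completely_positive n m \<Phi> \<and> trace_preserving n \<Phi>"

definition mat_unit :: "nat \<Rightarrow> nat \<Rightarrow> nat \<Rightarrow> complex mat" where
  "mat_unit n a b = mat n n (\<lambda>(i, j). if i = a \<and> j = b then 1 else 0)"

text \<open>Hilbert-Schmidt adjoint of Phi : L(C^n) -> L(C^m):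
  the entry (a,b) of Phi^*(Y) is <E_ab, Phi^*(Y)> = <Phi(E_ab), Y> = Tr(Phi(E_ab)^* Y).\<close>
definition hs_adjoint :: "nat \<Rightarrow> (complex mat \<Rightarrow> complex mat) \<Rightarrow> complex mat \<Rightarrow> complex mat" where
  "hs_adjoint n \<Phi> Y = mat n n (\<lambda>(a, b). mtrace (cadj (\<Phi> (mat_unit n a b)) * Y))"

text \<open>|X> = sum_{ij} X_ij e_i (x) e_j, with index i*d + j.\<close>
definition vectorize :: "nat \<Rightarrow> complex mat \<Rightarrow> complex vec" where
  "vectorize d X = vec (d * d) (\<lambda>k. X $$ (k div d, k mod d))"

definition ketbra :: "complex vec \<Rightarrow> complex vec \<Rightarrow> complex mat" where
  "ketbra v w = mat (dim_vec v) (dim_vec w) (\<lambda>(i, j). v $ i * cnj (w $ j))"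

definition orthonormal_basis :: "nat \<Rightarrow> (nat \<Rightarrow> complex vec) \<Rightarrow> bool" where
  "orthonormal_basis d e \<longleftrightarrow>
     (\<forall>i < d. e i \<in> carrier_vec d) \<and>
     (\<forall>i < d. \<forall>j < d. cinner (e i) (e j) = (if i = j then 1 else 0))"

definition G_mat :: "nat \<Rightarrow> (complex mat \<Rightarrow> complex mat) \<Rightarrow> (nat \<Rightarrow> complex vec) \<Rightarrow> complex mat" where
  "G_mat d \<Phi> e = mat (d * d) (d * d) (\<lambda>(p, q).
     \<Sum>i \<in> {i. i < d \<and> mtrace (hs_adjoint d \<Phi> (ketbra (e i) (e i))) \<noteq> 0}.
       (let P = hs_adjoint d \<Phi> (ketbra (e i) (e i))
        in ketbra (vectorize d P) (vectorize d P) $$ (p, q) / mtrace P))"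

text \<open>Digit k (k = 0 .. N-1, factor 0 most significant) of an index j < d^N
  of (C^d)^{(x)N}.\<close>
definition digit :: "nat \<Rightarrow> nat \<Rightarrow> nat \<Rightarrow> nat \<Rightarrow> nat" where
  "digit d N k j = (j div d ^ (N - Suc k)) mod d"

text \<open>Partial trace of Y on (C^d)^{(x)N} over all tensor factors except the i-th.\<close>
definition ptrace_keep :: "nat \<Rightarrow> nat \<Rightarrow> nat \<Rightarrow> complex mat \<Rightarrow> complex mat" where
  "ptrace_keep d N i Y = mat d d (\<lambda>(a, b).
     \<Sum>(j, j') \<in> {(j, j'). j < d ^ N \<and> j' < d ^ N \<and> digit d N i j = a \<and> digit d N i j' = b \<and>
                      (\<forall>k < N. k \<noteq> i \<longrightarrow> digit d N k j = digit d N k j')}.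
        Y $$ (j, j'))"

definition compatible :: "nat \<Rightarrow> nat \<Rightarrow> (nat \<Rightarrow> complex mat \<Rightarrow> complex mat) \<Rightarrow> bool" where
  "compatible d N \<Phi> \<longleftrightarrow>
     (\<exists>\<Lambda>. quantum_channel d (d ^ N) \<Lambda> \<and>
          (\<forall>i < N. \<forall>X \<in> carrier_mat d d. \<Phi> i X = ptrace_keep d N i (\<Lambda> X)))"

end

theory Submission
  imports Defs "Jordan_Normal_Form.Determinant"
begin


lemma qform_expand:
  assumes "v \<in> carrier_vec n" "M \<in> carrier_mat n n"
  shows "cinner v (M *\<^sub>v v) = (\<Sum>a<n. \<Sum>b<n. cnj (v $ a) * M $$ (a, b) * v $ b)"
  using assms
  by (auto simp: cinner_def mult_mat_vec_def scalar_prod_def sum_distrib_left mult.assoc atLeast0LessThan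
     intro!: sum.cong)

lemma mtrace_adj_mult:
  assumes "M \<in> carrier_mat n n" "Y \<in> carrier_mat n n"
  shows "mtrace (cadj M * Y) = (\<Sum>p<n. \<Sum>q<n. cnj (M $$ (q, p)) * Y $$ (q, p))"
  using assms
  by (auto simp: mtrace_def cadj_def scalar_prod_def atLeast0LessThan intro!: sum.cong)

lemma hs_adjoint_entry:
  assumes "a < n" "b < n"
  shows "hs_adjoint n \<Phi> Y $$ (a, b) = mtrace (cadj (\<Phi> (mat_unit n a b)) * Y)"
  using assms by (simp add: hs_adjoint_def)

lemma hs_adjoint_carrier[simp]: "hs_adjoint n \<Phi> Y \<in> carrier_mat n n"
  by (simp add: hs_adjoint_def)

lemma ketbra_carrier[simp]: "ketbra v w \<in> carrier_mat (dim_vec v) (dim_vec w)"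
  by (simp add: ketbra_def)

lemma qform_two:
  assumes "M \<in> carrier_mat n n" "a < n" "b < n" "a \<noteq> b"
  shows "cinner (vec n (\<lambda>x. if x = a then \<alpha> else if x = b then \<beta> else 0)) (M *\<^sub>v vec n (\<lambda>x. if x = a then \<alpha> else if x = b then \<beta> else 0))
     = cnj \<alpha> * \<alpha> * M $$ (a, a) + cnj \<alpha> * \<beta> * M $$ (a, b) + cnj \<beta> * \<alpha> * M $$ (b, a) + cnj \<beta> * \<beta> * M $$ (b, b)"
proof -
  have e: "\<And>A B. (\<Sum>x<n. (if x = a then A else if x = b then B else 0) :: complex) = A + B"
  proof -
    fix A B :: complex
    have "(\<Sum>x<n. (if x = a then A else if x = b then B else 0)) = (\<Sum>x<n. (if x = a then A else 0) + (if x = b then B else 0))"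
      using assms by (intro sum.cong) auto
    also have "\<dots> = A + B" using assms by (simp add: sum.distrib)
    finally show "(\<Sum>x<n. (if x = a then A else if x = b then B else 0) :: complex) = A + B" .
  qed
  have "cinner (vec n (\<lambda>x. if x = a then \<alpha> else if x = b then \<beta> else 0)) (M *\<^sub>v vec n (\<lambda>x. if x = a then \<alpha> else if x = b then \<beta> else 0))
    = (\<Sum>x<n. \<Sum>y<n. cnj (vec n (\<lambda>x. if x = a then \<alpha> else if x = b then \<beta> else 0) $ x) * M $$ (x, y) * (vec n (\<lambda>x. if x = a then \<alpha> else if x = b then \<beta> else 0)) $ y)"
    by (rule qform_expand[OF _ assms(1)]) simp
  also have "\<dots> = (\<Sum>x<n. if x = a then (\<Sum>y<n. cnj \<alpha> * M $$ (a, y) * (if y = a then \<alpha> else if y = b then \<beta> else 0))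
        else if x = b then (\<Sum>y<n. cnj \<beta> * M $$ (b, y) * (if y = a then \<alpha> else if y = b then \<beta> else 0)) else 0)"
    by (intro sum.cong) auto
  also have "\<dots> = (\<Sum>y<n. cnj \<alpha> * M $$ (a, y) * (if y = a then \<alpha> else if y = b then \<beta> else 0))
      + (\<Sum>y<n. cnj \<beta> * M $$ (b, y) * (if y = a then \<alpha> else if y = b then \<beta> else 0))"
    by (rule e)
  also have "(\<Sum>y<n. cnj \<alpha> * M $$ (a, y) * (if y = a then \<alpha> else if y = b then \<beta> else 0))
     = (\<Sum>y<n. if y = a then cnj \<alpha> * M $$ (a, a) * \<alpha> else if y = b then cnj \<alpha> * M $$ (a, b) * \<beta> else 0)"
    by (intro sum.cong) auto
  also have "\<dots> = cnj \<alpha> * M $$ (a, a) * \<alpha> + cnj \<alpha> * M $$ (a, b) * \<beta>"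
    by (rule e)
  also have "(\<Sum>y<n. cnj \<beta> * M $$ (b, y) * (if y = a then \<alpha> else if y = b then \<beta> else 0))
     = (\<Sum>y<n. if y = a then cnj \<beta> * M $$ (b, a) * \<alpha> else if y = b then cnj \<beta> * M $$ (b, b) * \<beta> else 0)"
    by (intro sum.cong) auto
  also have "\<dots> = cnj \<beta> * M $$ (b, a) * \<alpha> + cnj \<beta> * M $$ (b, b) * \<beta>"
    by (rule e)
  finally show ?thesis by (simp add: algebra_simps)
qed

lemma sum_delta_mult:
  assumes "finite S" "a \<in> S"
  shows "(\<Sum>y\<in>S. f y * (if y = a then 1 else 0)) = (f a :: 'x :: comm_ring_1)"
proof -
  have "(\<Sum>y\<in>S. f y * (if y = a then 1 else 0)) = (\<Sum>y\<in>S. if y = a then f y else 0)"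
    by (rule sum.cong) auto
  then show ?thesis using assms by simp
qed

lemma qform_one:
  assumes "M \<in> carrier_mat n n" "a < n"
  shows "cinner (vec n (\<lambda>x. if x = a then 1 else 0)) (M *\<^sub>v vec n (\<lambda>x. if x = a then 1 else 0)) = M $$ (a, a)"
proof -
  have "cinner (vec n (\<lambda>x. if x = a then 1 else 0)) (M *\<^sub>v vec n (\<lambda>x. if x = a then 1 else 0))
    = (\<Sum>x<n. \<Sum>y<n. cnj (vec n (\<lambda>x. if x = a then 1 else 0) $ x) * M $$ (x, y) * (vec n (\<lambda>x. if x = a then 1 else (0::complex))) $ y)"
    by (rule qform_expand[OF _ assms(1)]) simp
  also have "\<dots> = (\<Sum>x<n. if x = a then (\<Sum>y<n. if y = a then M $$ (a, a) else 0) else 0)"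
  proof (intro sum.cong refl)
    fix x assume "x \<in> {..<n}"
    show "(\<Sum>y<n. cnj (vec n (\<lambda>x. if x = a then 1 else 0) $ x) * M $$ (x, y) * vec n (\<lambda>x. if x = a then 1 else (0::complex)) $ y) =
         (if x = a then \<Sum>y<n. if y = a then M $$ (a, a) else 0 else 0)"
      using \<open>x \<in> {..<n}\<close> assms by (cases "x = a") (auto simp: sum_delta_mult)
  qed
  also have "\<dots> = M $$ (a, a)" using assms by simp
  finally show ?thesis .
qed



definition qpos :: "nat \<Rightarrow> complex mat \<Rightarrow> bool" where
  "qpos n M \<longleftrightarrow> M \<in> carrier_mat n n \<and>
     (\<forall>v\<in>carrier_vec n. Im (cinner v (M *\<^sub>v v)) = 0 \<and> 0 \<le> Re (cinner v (M *\<^sub>v v)))"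

lemma qpos_diag:
  assumes "qpos n M" "a < n"
  shows "Im (M $$ (a, a)) = 0" "0 \<le> Re (M $$ (a, a))"
proof -
  have M: "M \<in> carrier_mat n n" using assms qpos_def by auto
  have v: "vec n (\<lambda>x. if x = a then 1 else 0) \<in> carrier_vec n" by simp
  have "Im (cinner (vec n (\<lambda>x. if x = a then 1 else 0)) (M *\<^sub>v vec n (\<lambda>x. if x = a then 1 else 0))) = 0 \<and>
        0 \<le> Re (cinner (vec n (\<lambda>x. if x = a then 1 else 0)) (M *\<^sub>v vec n (\<lambda>x. if x = a then 1 else 0)))"
    using assms(1) v unfolding qpos_def by blast
  then show "Im (M $$ (a, a)) = 0" "0 \<le> Re (M $$ (a, a))" unfolding qform_one[OF M assms(2)] by auto
qed

lemma qpos_herm: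
  assumes "qpos n M" "a < n" "b < n"
  shows "M $$ (b, a) = cnj (M $$ (a, b))"
proof (cases "a = b")
  case True
  then show ?thesis using qpos_diag[OF assms(1,2)] by (simp add: complex_eq_iff)
next
  case False
  have M: "M \<in> carrier_mat n n" using assms(1) qpos_def by auto
  have "Im (cinner (vec n (\<lambda>x. if x = a then 1 else if x = b then 1 else 0)) (M *\<^sub>v vec n (\<lambda>x. if x = a then 1 else if x = b then 1 else 0))) = 0"
    using assms(1) unfolding qpos_def by auto
  then have 1: "Im (M $$ (a, b)) + Im (M $$ (b, a)) = 0"
    using qform_two[OF M assms(2,3) False, of 1 1] qpos_diag[OF assms(1)] assms by simp
  have "Im (cinner (vec n (\<lambda>x. if x = a then 1 else if x = b then \<i> else 0)) (M *\<^sub>v vec n (\<lambda>x. if x = a then 1 else if x = b then \<i> else 0))) = 0"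
    using assms(1) unfolding qpos_def by auto
  then have 2: "Re (M $$ (a, b)) - Re (M $$ (b, a)) = 0"
    using qform_two[OF M assms(2,3) False, of 1 \<i>] qpos_diag[OF assms(1)] assms by simp
  show ?thesis using 1 2 by (simp add: complex_eq_iff)
qed

lemma quad_disc:
  fixes p r s :: real
  assumes "0 \<le> p" "0 \<le> r" "0 \<le> s" "\<And>t. 0 \<le> t * t * p - 2 * t * s + s * r"
  shows "s \<le> p * r"
proof (cases "p > 0")
  case True
  have "0 \<le> (s / p) * (s / p) * p - 2 * (s / p) * s + s * r" by (rule assms(4))
  also have "\<dots> = s * r - s * s / p" using True by (simp add: field_simps power2_eq_square)
  finally have "s * s \<le> s * (p * r)" using True by (simp add: field_simps)
  then show ?thesis using assms(3) mult_le_cancel_left_pos[of s s "p * r"]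
    by (cases "s = 0") (auto simp: mult_nonneg_nonneg assms(1,2))
next
  case False
  then have "p = 0" using assms(1) by simp
  have "0 \<le> (r + 1) * (r + 1) * p - 2 * (r + 1) * s + s * r" by (rule assms(4))
  then have "s * (r + 2) \<le> 0" using \<open>p = 0\<close> by (simp add: algebra_simps)
  then have "s = 0" using assms(2,3) mult_pos_pos[of s "r + 2"] by linarith
  then show ?thesis using assms by simp
qed

lemma qpos_minor:
  assumes "qpos n M" "a < n" "b < n"
  shows "(cmod (M $$ (a, b)))^2 \<le> Re (M $$ (a, a)) * Re (M $$ (b, b))"
proof (cases "a = b")
  case True
  then show ?thesis using qpos_diag[OF assms(1,2)]
    by (simp add: cmod_def power2_eq_square)
next
  case False
  have M: "M \<in> carrier_mat n n" using assms(1) qpos_def by auto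
  define c where "c = M $$ (a, b)"
  have ba: "M $$ (b, a) = cnj c" using qpos_herm[OF assms] c_def by simp
  have cc: "c * cnj c = complex_of_real ((cmod c)^2)" "cnj c * c = complex_of_real ((cmod c)^2)"
    using complex_norm_square[of c] by (auto simp: mult.commute)
  have da: "M $$ (a, a) = complex_of_real (Re (M $$ (a, a)))" using qpos_diag[OF assms(1,2)]
    by (simp add: complex_eq_iff)
  have db: "M $$ (b, b) = complex_of_real (Re (M $$ (b, b)))" using qpos_diag[OF assms(1,3)]
    by (simp add: complex_eq_iff)
  show ?thesis
  proof (rule quad_disc)
    fix t :: real
    have "0 \<le> Re (cinner (vec n (\<lambda>x. if x = a then complex_of_real t else if x = b then - cnj c else 0))
       (M *\<^sub>v vec n (\<lambda>x. if x = a then complex_of_real t else if x = b then - cnj c else 0)))"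
      using assms(1) unfolding qpos_def by auto
    also have "cinner (vec n (\<lambda>x. if x = a then complex_of_real t else if x = b then - cnj c else 0))
       (M *\<^sub>v vec n (\<lambda>x. if x = a then complex_of_real t else if x = b then - cnj c else 0))
      = complex_of_real (t * t * Re (M $$ (a, a)) - 2 * t * (cmod c)^2 + (cmod c)^2 * Re (M $$ (b, b)))"
    proof -
      have "cinner (vec n (\<lambda>x. if x = a then complex_of_real t else if x = b then - cnj c else 0))
       (M *\<^sub>v vec n (\<lambda>x. if x = a then complex_of_real t else if x = b then - cnj c else 0))
        = of_real t * of_real t * M $$ (a, a) - of_real t * (cnj c * c) - of_real t * (c * cnj c) + (c * cnj c) * M $$ (b, b)"
        by (subst qform_two[OF M assms(2,3) False]) (simp add: ba c_def algebra_simps)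
      also have "\<dots> = of_real t * of_real t * of_real (Re (M $$ (a, a))) - of_real t * of_real ((cmod c)^2)
            - of_real t * of_real ((cmod c)^2) + of_real ((cmod c)^2) * of_real (Re (M $$ (b, b)))"
        by (subst da, subst db, simp only: cc)
      also have "\<dots> = complex_of_real (t * t * Re (M $$ (a, a)) - 2 * t * (cmod c)^2 + (cmod c)^2 * Re (M $$ (b, b)))"
        by simp
      finally show ?thesis .
    qed
    finally show "0 \<le> t * t * Re (M $$ (a, a)) - 2 * t * (cmod (M $$ (a, b)))\<^sup>2 + (cmod (M $$ (a, b)))\<^sup>2 * Re (M $$ (b, b))"
      by (simp add: c_def)
  qed (use qpos_diag[OF assms(1,2)] qpos_diag[OF assms(1,3)] in auto)
qed

lemma mtrace_carrier: "M \<in> carrier_mat n n \<Longrightarrow> mtrace M = (\<Sum>a<n. M $$ (a, a))"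
  by (simp add: mtrace_def)

lemma qpos_trace:
  assumes "qpos n M"
  shows "Im (mtrace M) = 0" "0 \<le> Re (mtrace M)" "mtrace M = complex_of_real (Re (mtrace M))"
proof -
  have M: "M \<in> carrier_mat n n" using assms qpos_def by auto
  show 1: "Im (mtrace M) = 0" using qpos_diag(1)[OF assms] by (simp add: mtrace_carrier[OF M] Im_sum)
  show "0 \<le> Re (mtrace M)" using qpos_diag(2)[OF assms] by (auto simp: mtrace_carrier[OF M] Re_sum intro!: sum_nonneg)
  show "mtrace M = complex_of_real (Re (mtrace M))" using 1 by (simp add: complex_eq_iff)
qed

lemma qpos_frob:
  assumes "qpos n M"
  shows "(\<Sum>a<n. \<Sum>b<n. (cmod (M $$ (a, b)))^2) \<le> (Re (mtrace M))^2"
proof -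
  have M: "M \<in> carrier_mat n n" using assms qpos_def by auto
  have "(\<Sum>a<n. \<Sum>b<n. (cmod (M $$ (a, b)))^2) \<le> (\<Sum>a<n. \<Sum>b<n. Re (M $$ (a, a)) * Re (M $$ (b, b)))"
    by (intro sum_mono qpos_minor[OF assms]) auto
  also have "\<dots> = (\<Sum>a<n. Re (M $$ (a, a))) * (\<Sum>b<n. Re (M $$ (b, b)))"
    by (simp add: sum_product)
  also have "\<dots> = (Re (mtrace M))^2" by (simp add: mtrace_carrier[OF M] Re_sum power2_eq_square)
  finally show ?thesis .
qed

lemma qpos_zero:
  assumes "qpos n M" "mtrace M = 0" "a < n" "b < n"
  shows "M $$ (a, b) = 0"
proof -
  have M: "M \<in> carrier_mat n n" using assms qpos_def by auto
  have "(\<Sum>a<n. Re (M $$ (a, a))) = 0" using assms(2) by (simp add: mtrace_carrier[OF M] flip: Re_sum)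
  then have "\<forall>a\<in>{..<n}. Re (M $$ (a, a)) = 0"
    using qpos_diag(2)[OF assms(1)] by (subst sum_nonneg_eq_0_iff[symmetric]) auto
  then have "(cmod (M $$ (a, b)))^2 \<le> 0" using qpos_minor[OF assms(1,3,4)] assms by simp
  then show ?thesis by simp
qed



lemma sum4_swap:
  "(\<Sum>q\<in>A. \<Sum>p\<in>B. \<Sum>a\<in>C. \<Sum>b\<in>D. g a b q p) = (\<Sum>a\<in>C. \<Sum>b\<in>D. \<Sum>q\<in>A. \<Sum>p\<in>B. (g a b q p :: 'x :: comm_monoid_add))"
proof -
  have "(\<Sum>q\<in>A. \<Sum>p\<in>B. \<Sum>a\<in>C. \<Sum>b\<in>D. g a b q p) = (\<Sum>q\<in>A. \<Sum>a\<in>C. \<Sum>p\<in>B. \<Sum>b\<in>D. g a b q p)"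
    by (rule sum.cong[OF refl], rule sum.swap)
  also have "\<dots> = (\<Sum>a\<in>C. \<Sum>q\<in>A. \<Sum>p\<in>B. \<Sum>b\<in>D. g a b q p)" by (rule sum.swap)
  also have "\<dots> = (\<Sum>a\<in>C. \<Sum>q\<in>A. \<Sum>b\<in>D. \<Sum>p\<in>B. g a b q p)"
    by (rule sum.cong[OF refl], rule sum.cong[OF refl], rule sum.swap)
  also have "\<dots> = (\<Sum>a\<in>C. \<Sum>b\<in>D. \<Sum>q\<in>A. \<Sum>p\<in>B. g a b q p)"
    by (rule sum.cong[OF refl], rule sum.swap)
  finally show ?thesis .
qed

lemma lin_expand:
  assumes lin: "linear_op_map d m \<Lambda>" and X: "X \<in> carrier_mat d d" and QP: "Q < m" "P < m"
  shows "\<Lambda> X $$ (Q, P) = (\<Sum>a<d. \<Sum>b<d. X $$ (a, b) * \<Lambda> (mat_unit d a b) $$ (Q, P))"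
proof -
  define R where "R S = mat d d (\<lambda>(a, b). if (a, b) \<in> S then X $$ (a, b) else 0)" for S
  have car: "\<And>Y. Y \<in> carrier_mat d d \<Longrightarrow> \<Lambda> Y \<in> carrier_mat m m" using lin linear_op_map_def by auto
  have add: "\<And>Y Z. Y \<in> carrier_mat d d \<Longrightarrow> Z \<in> carrier_mat d d \<Longrightarrow> \<Lambda> (Y + Z) = \<Lambda> Y + \<Lambda> Z"
    using lin linear_op_map_def by auto
  have sc: "\<And>Y c. Y \<in> carrier_mat d d \<Longrightarrow> \<Lambda> (c \<cdot>\<^sub>m Y) = c \<cdot>\<^sub>m \<Lambda> Y"
    using lin linear_op_map_def by auto
  have RC: "R S \<in> carrier_mat d d" for S by (simp add: R_def)
  have EC: "mat_unit d a b \<in> carrier_mat d d" for a b by (simp add: mat_unit_def)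
  have main: "finite S \<Longrightarrow> \<Lambda> (R S) $$ (Q, P) = (\<Sum>(a, b)\<in>S. X $$ (a, b) * \<Lambda> (mat_unit d a b) $$ (Q, P))" for S
  proof (induction S rule: finite_induct)
    case empty
    have "R {} = 0 \<cdot>\<^sub>m X" using X by (auto simp: R_def intro!: eq_matI)
    then have "\<Lambda> (R {}) = 0 \<cdot>\<^sub>m \<Lambda> X" using sc[OF X] by simp
    then show ?case using car[OF X] QP by simp
  next
    case (insert x S)
    obtain a b where x: "x = (a, b)" by fastforce
    have "R (insert x S) = R S + (X $$ (a, b)) \<cdot>\<^sub>m mat_unit d a b"
      using insert(2) x by (auto simp: R_def mat_unit_def intro!: eq_matI)
    then have eq: "\<Lambda> (R (insert x S)) = \<Lambda> (R S) + (X $$ (a, b)) \<cdot>\<^sub>m \<Lambda> (mat_unit d a b)"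
      using add[OF RC] sc[OF EC] by (simp add: EC)
    have "\<Lambda> (R (insert x S)) $$ (Q, P) = \<Lambda> (R S) $$ (Q, P) + X $$ (a, b) * \<Lambda> (mat_unit d a b) $$ (Q, P)"
    proof -
      have c2: "\<Lambda> (mat_unit d a b) \<in> carrier_mat m m" by (rule car[OF EC])
      then have "dim_row (\<Lambda> (mat_unit d a b)) = m" "dim_col (\<Lambda> (mat_unit d a b)) = m" by auto
      then show ?thesis using QP eq by simp
    qed
    then show ?case using insert x by simp
  qed
  have "R ({..<d} \<times> {..<d}) = X" using X by (auto simp: R_def intro!: eq_matI)
  then have "\<Lambda> X $$ (Q, P) = (\<Sum>(a, b)\<in>{..<d} \<times> {..<d}. X $$ (a, b) * \<Lambda> (mat_unit d a b) $$ (Q, P))"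
    using main[of "{..<d} \<times> {..<d}"] by simp
  then show ?thesis by (simp add: sum.cartesian_product)
qed

lemma ampliate1:
  assumes "X \<in> carrier_mat d d" "\<Lambda> X \<in> carrier_mat m m"
  shows "ampliate 1 d m \<Lambda> X = \<Lambda> X"
proof -
  have "block_of d 0 0 X = X" using assms(1) by (auto simp: block_of_def intro!: eq_matI)
  then show ?thesis using assms(2) by (auto simp: ampliate_def intro!: eq_matI)
qed

lemma ketbra_form:
  assumes "v \<in> carrier_vec n" "w \<in> carrier_vec n"
  shows "cinner w (ketbra v v *\<^sub>v w) = cnj (cinner v w) * cinner v w"
proof -
  have "cinner w (ketbra v v *\<^sub>v w) = (\<Sum>a<n. \<Sum>b<n. cnj (w $ a) * (v $ a * cnj (v $ b)) * w $ b)"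
    using assms by (subst qform_expand[of _ n]) (auto simp: ketbra_def)
  also have "\<dots> = (\<Sum>a<n. cnj (w $ a) * v $ a) * (\<Sum>b<n. cnj (v $ b) * w $ b)"
    by (simp add: sum_product mult_ac)
  also have "\<dots> = cnj (cinner v w) * cinner v w"
    using assms by (simp add: cinner_def mult.commute)
  finally show ?thesis .
qed

lemma psd_ketbra:
  assumes "v \<in> carrier_vec n"
  shows "psd_mat n (ketbra v v)"
proof -
  have "cadj (ketbra v v) = ketbra v v" using assms by (auto simp: cadj_def ketbra_def intro!: eq_matI)
  moreover have "ketbra v v \<in> carrier_mat n n" using assms by (simp add: ketbra_def)
  moreover have "0 \<le> Re (cinner w (ketbra v v *\<^sub>v w))" if "w \<in> carrier_vec n" for w
    using ketbra_form[OF assms that] by (simp add: mult.commute)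
  ultimately show ?thesis by (simp add: psd_mat_def hermitian_mat_def)
qed

lemma herm_entry:
  assumes "hermitian_mat n M" "a < n" "b < n"
  shows "M $$ (b, a) = cnj (M $$ (a, b))"
proof -
  have M: "M \<in> carrier_mat n n" "cadj M = M" using assms by (auto simp: hermitian_mat_def)
  have "M $$ (b, a) = cadj M $$ (b, a)" using M by simp
  also have "\<dots> = cnj (M $$ (a, b))" using M(1) assms(2,3) by (simp add: cadj_def)
  finally show ?thesis .
qed

lemma herm_form_real:
  assumes "hermitian_mat n M" "w \<in> carrier_vec n"
  shows "Im (cinner w (M *\<^sub>v w)) = 0"
proof -
  have M: "M \<in> carrier_mat n n" using assms hermitian_mat_def by auto
  have "cnj (cinner w (M *\<^sub>v w)) = (\<Sum>a<n. \<Sum>b<n. w $ a * cnj (M $$ (a, b)) * cnj (w $ b))"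
    by (simp add: qform_expand[OF assms(2) M] cnj_sum)
  also have "\<dots> = (\<Sum>a<n. \<Sum>b<n. w $ a * M $$ (b, a) * cnj (w $ b))"
  proof (intro sum.cong refl)
    fix a b assume "a \<in> {..<n}" "b \<in> {..<n}"
    then show "w $ a * cnj (M $$ (a, b)) * cnj (w $ b) = w $ a * M $$ (b, a) * cnj (w $ b)"
      using herm_entry[OF assms(1), of a b] by simp
  qed
  also have "\<dots> = (\<Sum>b<n. \<Sum>a<n. cnj (w $ b) * M $$ (b, a) * w $ a)"
    by (subst sum.swap) (simp add: mult_ac)
  also have "\<dots> = cinner w (M *\<^sub>v w)" by (simp add: qform_expand[OF assms(2) M])
  finally show ?thesis using Reals_cnj_iff complex_is_Real_iff by metis
qed



lemma B_qpos:
  assumes lin: "linear_op_map d m \<Lambda>" and cp: "completely_positive d m \<Lambda>" and f: "f \<in> carrier_vec m"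
  shows "qpos d (hs_adjoint d \<Lambda> (ketbra f f))"
  unfolding qpos_def
proof (rule conjI)
  show "hs_adjoint d \<Lambda> (ketbra f f) \<in> carrier_mat d d" by simp
  show "\<forall>v\<in>carrier_vec d. Im (cinner v (hs_adjoint d \<Lambda> (ketbra f f) *\<^sub>v v)) = 0 \<and>
             0 \<le> Re (cinner v (hs_adjoint d \<Lambda> (ketbra f f) *\<^sub>v v))"
  proof (rule ballI)
  fix v :: "complex vec" assume v: "v \<in> carrier_vec d"
  define B where "B = hs_adjoint d \<Lambda> (ketbra f f)"
  define W where "W = \<Lambda> (ketbra v v)"
  have car: "\<And>Y. Y \<in> carrier_mat d d \<Longrightarrow> \<Lambda> Y \<in> carrier_mat m m" using lin linear_op_map_def by auto
  have kv: "ketbra v v \<in> carrier_mat d d" using v by (simp add: ketbra_def)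
  have kf: "ketbra f f \<in> carrier_mat m m" using f by (simp add: ketbra_def)
  have EC: "mat_unit d a b \<in> carrier_mat d d" for a b by (simp add: mat_unit_def)
  have Wc: "W \<in> carrier_mat m m" using car[OF kv] W_def by simp
  have "psd_mat (1 * d) (ketbra v v)" using psd_ketbra[OF v] by simp
  then have "psd_mat (1 * m) (ampliate 1 d m \<Lambda> (ketbra v v))" using cp completely_positive_def by blast
  then have psdW: "psd_mat m W" using ampliate1[of "ketbra v v" d \<Lambda> m, OF kv car[OF kv]] W_def by simp
  have Wf: "Im (cinner f (W *\<^sub>v f)) = 0" "0 \<le> Re (cinner f (W *\<^sub>v f))"
    using psdW herm_form_real[OF _ f] f by (auto simp: psd_mat_def)
  define g where "g a b q p = cnj (v $ a) * v $ b * f $ q * cnj (f $ p) * cnj (\<Lambda> (mat_unit d a b) $$ (q, p))" for a b q p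
  have Bab: "B $$ (a, b) = (\<Sum>q<m. \<Sum>p<m. cnj (\<Lambda> (mat_unit d a b) $$ (q, p)) * (f $ q * cnj (f $ p)))"
    if "a < d" "b < d" for a b
  proof -
    have "B $$ (a, b) = (\<Sum>p<m. \<Sum>q<m. cnj (\<Lambda> (mat_unit d a b) $$ (q, p)) * ketbra f f $$ (q, p))"
      unfolding B_def using that by (simp add: hs_adjoint_entry mtrace_adj_mult[OF car[OF EC] kf])
    also have "\<dots> = (\<Sum>p<m. \<Sum>q<m. cnj (\<Lambda> (mat_unit d a b) $$ (q, p)) * (f $ q * cnj (f $ p)))"
      using f by (intro sum.cong refl) (auto simp: ketbra_def)
    also have "\<dots> = (\<Sum>q<m. \<Sum>p<m. cnj (\<Lambda> (mat_unit d a b) $$ (q, p)) * (f $ q * cnj (f $ p)))"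
      by (rule sum.swap)
    finally show ?thesis .
  qed
  have Wqp: "W $$ (q, p) = (\<Sum>a<d. \<Sum>b<d. (v $ a * cnj (v $ b)) * \<Lambda> (mat_unit d a b) $$ (q, p))"
    if "q < m" "p < m" for q p
  proof -
    have "W $$ (q, p) = (\<Sum>a<d. \<Sum>b<d. ketbra v v $$ (a, b) * \<Lambda> (mat_unit d a b) $$ (q, p))"
      unfolding W_def by (rule lin_expand[OF lin kv that])
    also have "\<dots> = (\<Sum>a<d. \<Sum>b<d. (v $ a * cnj (v $ b)) * \<Lambda> (mat_unit d a b) $$ (q, p))"
      using v by (intro sum.cong refl) (auto simp: ketbra_def)
    finally show ?thesis .
  qed
  have L: "cinner v (B *\<^sub>v v) = (\<Sum>a<d. \<Sum>b<d. \<Sum>q<m. \<Sum>p<m. g a b q p)"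
  proof -
    have "cinner v (B *\<^sub>v v) = (\<Sum>a<d. \<Sum>b<d. cnj (v $ a) * B $$ (a, b) * v $ b)"
      by (rule qform_expand[OF v]) (simp add: B_def)
    also have "\<dots> = (\<Sum>a<d. \<Sum>b<d. \<Sum>q<m. \<Sum>p<m. g a b q p)"
      by (intro sum.cong refl) (simp add: Bab g_def sum_distrib_left sum_distrib_right mult_ac)
    finally show ?thesis .
  qed
  have R: "cnj (cinner f (W *\<^sub>v f)) = (\<Sum>q<m. \<Sum>p<m. \<Sum>a<d. \<Sum>b<d. g a b q p)"
  proof -
    have "cnj (cinner f (W *\<^sub>v f)) = cnj (\<Sum>q<m. \<Sum>p<m. cnj (f $ q) * W $$ (q, p) * f $ p)"
      using qform_expand[OF f Wc] by simp
    also have "\<dots> = (\<Sum>q<m. \<Sum>p<m. f $ q * cnj (W $$ (q, p)) * cnj (f $ p))"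
      by (simp add: cnj_sum)
    also have "\<dots> = (\<Sum>q<m. \<Sum>p<m. \<Sum>a<d. \<Sum>b<d. g a b q p)"
      by (intro sum.cong refl) (simp add: Wqp g_def cnj_sum sum_distrib_left sum_distrib_right mult_ac)
    finally show ?thesis .
  qed
  have "cinner v (B *\<^sub>v v) = cnj (cinner f (W *\<^sub>v f))"
    unfolding L R by (rule sum4_swap[symmetric])
  then show "Im (cinner v (hs_adjoint d \<Lambda> (ketbra f f) *\<^sub>v v)) = 0 \<and>
             0 \<le> Re (cinner v (hs_adjoint d \<Lambda> (ketbra f f) *\<^sub>v v))"
    using Wf B_def by simp
  qed
qed



lemma onb_complete:
  assumes onb: "orthonormal_basis d e" and pq: "p < d" "q < d"
  shows "(\<Sum>b<d. e b $ p * cnj (e b $ q)) = (if p = q then 1 else 0)"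
proof -
  define U where "U = mat d d (\<lambda>(p, b). e b $ p)"
  define V where "V = mat d d (\<lambda>(b, q). cnj (e b $ q))"
  have ec: "\<And>b. b < d \<Longrightarrow> dim_vec (e b) = d" using onb by (auto simp: orthonormal_basis_def)
  have Uc: "U \<in> carrier_mat d d" and Vc: "V \<in> carrier_mat d d" by (auto simp: U_def V_def)
  have "V * U = 1\<^sub>m d"
  proof (rule eq_matI)
    fix i j assume ij: "i < dim_row (1\<^sub>m d)" "j < dim_col (1\<^sub>m d)"
    then have "(V * U) $$ (i, j) = (\<Sum>p\<in>{0..<d}. cnj (e i $ p) * e j $ p)"
      by (simp add: V_def U_def scalar_prod_def)
    also have "\<dots> = cinner (e i) (e j)" using ij ec by (simp add: cinner_def atLeast0LessThan)
    also have "\<dots> = 1\<^sub>m d $$ (i, j)" using ij onb by (simp add: orthonormal_basis_def)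
    finally show "(V * U) $$ (i, j) = 1\<^sub>m d $$ (i, j)" .
  qed (auto simp: V_def U_def)
  then have "U * V = 1\<^sub>m d" by (rule mat_mult_left_right_inverse[OF Vc Uc])
  then have "(U * V) $$ (p, q) = 1\<^sub>m d $$ (p, q)" by simp
  then show ?thesis using pq by (simp add: U_def V_def scalar_prod_def atLeast0LessThan)
qed

lemma prod_indicator:
  assumes "finite S"
  shows "(\<Prod>i\<in>S. (if P i then 1 else 0) :: complex) = (if \<forall>i\<in>S. P i then 1 else 0)"
proof (cases "\<forall>i\<in>S. P i")
  case True
  then show ?thesis by simp
next
  case False
  then show ?thesis using assms by (auto simp: prod_zero_iff)
qed

definition tvec :: "nat \<Rightarrow> nat \<Rightarrow> (nat \<Rightarrow> nat \<Rightarrow> complex vec) \<Rightarrow> (nat \<Rightarrow> nat) \<Rightarrow> complex vec" where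
  "tvec d N e j = vec (d ^ N) (\<lambda>J. \<Prod>i<N. e i (j i) $ digit d N i J)"

lemma tvec_carrier[simp]: "tvec d N e j \<in> carrier_vec (d ^ N)"
  by (simp add: tvec_def)

lemma digit_less: "d \<ge> 1 \<Longrightarrow> digit d N i J < d"
  by (simp add: digit_def)

lemma tvec_sum:
  assumes d: "d \<ge> 1" and onb: "\<forall>i<N. orthonormal_basis d (e i)" and k: "k < N" and a: "a < d"
    and J: "J < d ^ N" "J' < d ^ N"
  shows "(\<Sum>j\<in>PiE {..<N} (\<lambda>_. {..<d}). (if j k = a then 1 else 0) * (tvec d N e j $ J * cnj (tvec d N e j $ J')))
    = (if \<forall>i<N. i \<noteq> k \<longrightarrow> digit d N i J = digit d N i J' then 1 else 0) *
      (e k a $ digit d N k J * cnj (e k a $ digit d N k J'))"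
proof -
  define h where "h i b = (if i = k then (if b = a then 1 else 0) else 1) *
      (e i b $ digit d N i J * cnj (e i b $ digit d N i J'))" for i b
  have 1: "(if j k = a then 1 else 0) * (tvec d N e j $ J * cnj (tvec d N e j $ J')) = (\<Prod>i<N. h i (j i))" for j
  proof -
    have "(\<Prod>i<N. h i (j i)) = (\<Prod>i<N. (if i = k then (if j i = a then 1 else 0) else 1)) *
        (\<Prod>i<N. e i (j i) $ digit d N i J * cnj (e i (j i) $ digit d N i J'))"
      unfolding h_def by (rule prod.distrib)
    also have "(\<Prod>i<N. (if i = k then (if j i = a then 1 else 0) else 1)) = (if j k = a then 1 else 0)"
      using k by (simp add: prod.delta)
    also have "(\<Prod>i<N. e i (j i) $ digit d N i J * cnj (e i (j i) $ digit d N i J'))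
        = tvec d N e j $ J * cnj (tvec d N e j $ J')"
      using J by (simp add: tvec_def prod.distrib cnj_prod)
    finally show ?thesis by simp
  qed
  have "(\<Sum>j\<in>PiE {..<N} (\<lambda>_. {..<d}). (if j k = a then 1 else 0) * (tvec d N e j $ J * cnj (tvec d N e j $ J')))
      = (\<Sum>j\<in>PiE {..<N} (\<lambda>_. {..<d}). \<Prod>i<N. h i (j i))"
    using 1 by simp
  also have "\<dots> = (\<Prod>i<N. \<Sum>b<d. h i b)"
    by (rule prod_sum_PiE[symmetric]) auto
  also have "\<dots> = (\<Prod>i<N. if i = k then e k a $ digit d N k J * cnj (e k a $ digit d N k J')
       else (if digit d N i J = digit d N i J' then 1 else 0))"
  proof (rule prod.cong[OF refl])
    fix i assume i: "i \<in> {..<N}"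
    show "(\<Sum>b<d. h i b) = (if i = k then e k a $ digit d N k J * cnj (e k a $ digit d N k J')
       else (if digit d N i J = digit d N i J' then 1 else 0))"
    proof (cases "i = k")
      case True
      have "(\<Sum>b<d. h i b) = (\<Sum>b<d. if b = a then e k a $ digit d N k J * cnj (e k a $ digit d N k J') else 0)"
        using True by (intro sum.cong refl) (auto simp: h_def)
      then show ?thesis using True a by simp
    next
      case False
      have "(\<Sum>b<d. h i b) = (\<Sum>b<d. e i b $ digit d N i J * cnj (e i b $ digit d N i J'))"
        using False by (simp add: h_def)
      also have "\<dots> = (if digit d N i J = digit d N i J' then 1 else 0)"
        using onb i digit_less[OF d] by (intro onb_complete) auto
      finally show ?thesis using False by simp
    qed
  qed
  also have "\<dots> = (e k a $ digit d N k J * cnj (e k a $ digit d N k J')) *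
      (\<Prod>i\<in>{..<N} - {k}. (if digit d N i J = digit d N i J' then 1 else 0))"
    using k by (subst prod.remove[of _ k]) (auto intro!: prod.cong)
  also have "(\<Prod>i\<in>{..<N} - {k}. (if digit d N i J = digit d N i J' then 1 else 0 :: complex))
      = (if \<forall>i<N. i \<noteq> k \<longrightarrow> digit d N i J = digit d N i J' then 1 else 0)"
  proof -
    have "(\<forall>i\<in>{..<N} - {k}. digit d N i J = digit d N i J') = (\<forall>i<N. i \<noteq> k \<longrightarrow> digit d N i J = digit d N i J')"
      by auto
    then show ?thesis using prod_indicator[of "{..<N} - {k}" "\<lambda>i. digit d N i J = digit d N i J'"] by (simp split del: if_split)
  qed
  finally show ?thesis by (simp add: mult.commute)
qed



lemma marginal:
  assumes d: "d \<ge> 1" and onb: "\<forall>i<N. orthonormal_basis d (e i)" and k: "k < N" and a: "a < d"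
    and rs: "r < d" "s < d"
    and lin: "linear_op_map d (d ^ N) \<Lambda>"
    and comp: "\<forall>X\<in>carrier_mat d d. \<Psi> X = ptrace_keep d N k (\<Lambda> X)"
  shows "hs_adjoint d \<Psi> (ketbra (e k a) (e k a)) $$ (r, s) =
    (\<Sum>j\<in>PiE {..<N} (\<lambda>_. {..<d}). (if j k = a then 1 else 0) *
        hs_adjoint d \<Lambda> (ketbra (tvec d N e j) (tvec d N e j)) $$ (r, s))"
proof -
  define D where "D = d ^ N"
  define M where "M = \<Lambda> (mat_unit d r s)"
  define Y where "Y = ketbra (e k a) (e k a)"
  define oth where "oth J J' = (\<forall>i<N. i \<noteq> k \<longrightarrow> digit d N i J = digit d N i J')" for J J'
  define S where "S = {(J, J'). J < D \<and> J' < D \<and> oth J J'}"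
  define g where "g x = (digit d N k (fst x), digit d N k (snd x))" for x :: "nat \<times> nat"
  define JJ where "JJ = PiE {..<N} (\<lambda>_. {..<d})"
  have ec: "e k a \<in> carrier_vec d" using onb k a by (auto simp: orthonormal_basis_def)
  have Yc: "Y \<in> carrier_mat d d" using ec by (simp add: Y_def ketbra_def)
  have Yent: "Y $$ (q, p) = e k a $ q * cnj (e k a $ p)" if "q < d" "p < d" for q p
    using that ec by (simp add: Y_def ketbra_def)
  have EC: "mat_unit d r s \<in> carrier_mat d d" by (simp add: mat_unit_def)
  have Mc: "M \<in> carrier_mat D D" using lin EC by (simp add: M_def D_def linear_op_map_def)
  have Psi: "\<Psi> (mat_unit d r s) = ptrace_keep d N k M" using comp EC M_def by simp
  have Pc: "\<Psi> (mat_unit d r s) \<in> carrier_mat d d" using Psi by (simp add: ptrace_keep_def)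
  have finS: "finite S" by (rule finite_subset[of _ "{..<D} \<times> {..<D}"]) (auto simp: S_def)
  have fin: "finite JJ" by (simp add: JJ_def finite_PiE)
  have dl: "\<And>J. digit d N k J < d" using digit_less[OF d] .
  have "(\<Sum>j\<in>JJ. (if j k = a then 1 else 0) * hs_adjoint d \<Lambda> (ketbra (tvec d N e j) (tvec d N e j)) $$ (r, s))
     = (\<Sum>j\<in>JJ. \<Sum>P<D. \<Sum>Q<D. (if j k = a then 1 else 0) * (cnj (M $$ (Q, P)) * (tvec d N e j $ Q * cnj (tvec d N e j $ P))))"
  proof (rule sum.cong[OF refl])
    fix j assume "j \<in> JJ"
    have kc: "ketbra (tvec d N e j) (tvec d N e j) \<in> carrier_mat D D" by (simp add: ketbra_def D_def tvec_def)
    have "hs_adjoint d \<Lambda> (ketbra (tvec d N e j) (tvec d N e j)) $$ (r, s)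
       = mtrace (cadj M * ketbra (tvec d N e j) (tvec d N e j))"
      using rs by (simp add: hs_adjoint_entry M_def)
    also have "\<dots> = (\<Sum>P<D. \<Sum>Q<D. cnj (M $$ (Q, P)) * ketbra (tvec d N e j) (tvec d N e j) $$ (Q, P))"
      by (rule mtrace_adj_mult[OF Mc kc])
    also have "\<dots> = (\<Sum>P<D. \<Sum>Q<D. cnj (M $$ (Q, P)) * (tvec d N e j $ Q * cnj (tvec d N e j $ P)))"
      by (intro sum.cong refl) (simp add: ketbra_def tvec_def D_def)
    finally show "(if j k = a then 1 else 0) * hs_adjoint d \<Lambda> (ketbra (tvec d N e j) (tvec d N e j)) $$ (r, s)
       = (\<Sum>P<D. \<Sum>Q<D. (if j k = a then 1 else 0) * (cnj (M $$ (Q, P)) * (tvec d N e j $ Q * cnj (tvec d N e j $ P))))"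
      by (simp add: sum_distrib_left)
  qed
  also have "\<dots> = (\<Sum>P<D. \<Sum>Q<D. \<Sum>j\<in>JJ. (if j k = a then 1 else 0) * (cnj (M $$ (Q, P)) * (tvec d N e j $ Q * cnj (tvec d N e j $ P))))"
    by (subst sum.swap, rule sum.cong[OF refl], rule sum.swap)
  also have "\<dots> = (\<Sum>P<D. \<Sum>Q<D. cnj (M $$ (Q, P)) * ((if oth Q P then 1 else 0) * (e k a $ digit d N k Q * cnj (e k a $ digit d N k P))))"
  proof (intro sum.cong refl)
    fix P Q assume "P \<in> {..<D}" "Q \<in> {..<D}"
    then have "(\<Sum>j\<in>JJ. (if j k = a then 1 else 0) * (tvec d N e j $ Q * cnj (tvec d N e j $ P)))
       = (if oth Q P then 1 else 0) * (e k a $ digit d N k Q * cnj (e k a $ digit d N k P))"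
      unfolding JJ_def oth_def using tvec_sum[OF d onb k a] D_def by simp
    moreover have "(\<Sum>j\<in>JJ. (if j k = a then 1 else 0) * (cnj (M $$ (Q, P)) * (tvec d N e j $ Q * cnj (tvec d N e j $ P))))
       = cnj (M $$ (Q, P)) * (\<Sum>j\<in>JJ. (if j k = a then 1 else 0) * (tvec d N e j $ Q * cnj (tvec d N e j $ P)))"
      by (simp add: sum_distrib_left mult.left_commute)
    ultimately show "(\<Sum>j\<in>JJ. (if j k = a then 1 else 0) * (cnj (M $$ (Q, P)) * (tvec d N e j $ Q * cnj (tvec d N e j $ P))))
       = cnj (M $$ (Q, P)) * ((if oth Q P then 1 else 0) * (e k a $ digit d N k Q * cnj (e k a $ digit d N k P)))"
      by (simp only:)
  qed
  also have "\<dots> = (\<Sum>Q<D. \<Sum>P<D. if oth Q P then cnj (M $$ (Q, P)) * Y $$ (digit d N k Q, digit d N k P) else 0)"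
    by (subst sum.swap) (intro sum.cong refl, simp add: Yent dl)
  also have "\<dots> = (\<Sum>x\<in>{..<D} \<times> {..<D}. if oth (fst x) (snd x) then cnj (M $$ x) * Y $$ g x else 0)"
    by (simp add: sum.cartesian_product case_prod_beta) (intro sum.cong refl, auto simp: g_def)
  also have "\<dots> = (\<Sum>x\<in>S. cnj (M $$ x) * Y $$ g x)"
  proof -
    have "S = {x \<in> {..<D} \<times> {..<D}. oth (fst x) (snd x)}" by (auto simp: S_def)
    then show ?thesis by (simp add: sum.inter_filter)
  qed
  also have "\<dots> = (\<Sum>y\<in>{..<d} \<times> {..<d}. \<Sum>x\<in>{x \<in> S. g x = y}. cnj (M $$ x) * Y $$ g x)"
    by (rule sum.group[symmetric]) (use finS in \<open>auto simp: S_def g_def dl\<close>)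
  also have "\<dots> = (\<Sum>y\<in>{..<d} \<times> {..<d}. \<Sum>x\<in>{x \<in> S. g x = y}. cnj (M $$ x) * Y $$ y)"
    by (intro sum.cong refl) auto
  finally have RHS: "(\<Sum>j\<in>JJ. (if j k = a then 1 else 0) * hs_adjoint d \<Lambda> (ketbra (tvec d N e j) (tvec d N e j)) $$ (r, s))
     = (\<Sum>y\<in>{..<d} \<times> {..<d}. \<Sum>x\<in>{x \<in> S. g x = y}. cnj (M $$ x) * Y $$ y)" .
  have "hs_adjoint d \<Psi> (ketbra (e k a) (e k a)) $$ (r, s) = (\<Sum>p<d. \<Sum>q<d. cnj (\<Psi> (mat_unit d r s) $$ (q, p)) * Y $$ (q, p))"
    using rs by (simp add: hs_adjoint_entry mtrace_adj_mult[OF Pc Yc] flip: Y_def)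
  also have "\<dots> = (\<Sum>q<d. \<Sum>p<d. cnj (\<Psi> (mat_unit d r s) $$ (q, p)) * Y $$ (q, p))"
    by (rule sum.swap)
  also have "\<dots> = (\<Sum>y\<in>{..<d} \<times> {..<d}. cnj (\<Psi> (mat_unit d r s) $$ y) * Y $$ y)"
    by (simp add: sum.cartesian_product case_prod_beta)
  also have "\<dots> = (\<Sum>y\<in>{..<d} \<times> {..<d}. \<Sum>x\<in>{x \<in> S. g x = y}. cnj (M $$ x) * Y $$ y)"
  proof (rule sum.cong[OF refl])
    fix y assume y: "y \<in> {..<d} \<times> {..<d}"
    obtain q p where qp: "y = (q, p)" by fastforce
    have set: "{(j, j'). j < d ^ N \<and> j' < d ^ N \<and> digit d N k j = q \<and> digit d N k j' = p \<and>
                      (\<forall>k'<N. k' \<noteq> k \<longrightarrow> digit d N k' j = digit d N k' j')} = {x \<in> S. g x = y}"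
      by (auto simp: S_def g_def qp oth_def D_def)
    have "\<Psi> (mat_unit d r s) $$ y = (\<Sum>x\<in>{x \<in> S. g x = y}. M $$ x)"
      using y qp Psi by (simp add: ptrace_keep_def set case_prod_beta)
    then show "cnj (\<Psi> (mat_unit d r s) $$ y) * Y $$ y = (\<Sum>x\<in>{x \<in> S. g x = y}. cnj (M $$ x) * Y $$ y)"
      by (simp add: cnj_sum sum_distrib_right)
  qed
  finally show ?thesis using RHS JJ_def by simp
qed



lemma cs_real:
  fixes \<tau> u :: "'j \<Rightarrow> real"
  assumes "finite A" "\<And>j. j \<in> A \<Longrightarrow> 0 < \<tau> j"
  shows "(\<Sum>j\<in>A. \<tau> j * u j)^2 \<le> (\<Sum>j\<in>A. \<tau> j) * (\<Sum>j\<in>A. \<tau> j * (u j)^2)"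
proof (cases "A = {}")
  case True then show ?thesis by simp
next
  case False
  define T where "T = (\<Sum>j\<in>A. \<tau> j)"
  define W where "W = (\<Sum>j\<in>A. \<tau> j * u j)"
  define Q where "Q = (\<Sum>j\<in>A. \<tau> j * (u j)^2)"
  have Tpos: "T > 0" unfolding T_def using assms False by (intro sum_pos) auto
  have "0 \<le> (\<Sum>j\<in>A. \<tau> j * (u j * T - W)^2)"
    using assms(2) by (intro sum_nonneg mult_nonneg_nonneg) (auto simp: less_imp_le)
  also have "\<dots> = (\<Sum>j\<in>A. T^2 * (\<tau> j * (u j)^2) - (2 * T * W) * (\<tau> j * u j) + W^2 * \<tau> j)"
    by (intro sum.cong refl) (simp add: power2_eq_square algebra_simps)
  also have "\<dots> = T^2 * Q - (2 * T * W) * W + W^2 * T"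
    by (simp add: sum.distrib sum_subtractf sum_distrib_left T_def W_def Q_def)
  also have "\<dots> = T * (T * Q - W^2)" by (simp add: power2_eq_square algebra_simps)
  finally have "0 \<le> T * Q - W^2" using Tpos by (simp add: zero_le_mult_iff)
  then show ?thesis by (simp add: T_def W_def Q_def)
qed

lemma cs_complex:
  fixes \<tau> :: "'j \<Rightarrow> real" and y :: "'j \<Rightarrow> complex"
  assumes "finite A" "\<And>j. j \<in> A \<Longrightarrow> 0 < \<tau> j" "0 < (\<Sum>j\<in>A. \<tau> j)"
  shows "(cmod (\<Sum>j\<in>A. y j))^2 / (\<Sum>j\<in>A. \<tau> j) \<le> (\<Sum>j\<in>A. (cmod (y j))^2 / \<tau> j)"
proof -
  have "cmod (\<Sum>j\<in>A. y j) \<le> (\<Sum>j\<in>A. cmod (y j))" by (rule norm_sum)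
  then have "(cmod (\<Sum>j\<in>A. y j))^2 \<le> (\<Sum>j\<in>A. cmod (y j))^2"
    by (simp add: power_mono)
  also have "(\<Sum>j\<in>A. cmod (y j)) = (\<Sum>j\<in>A. \<tau> j * (cmod (y j) / \<tau> j))"
    using assms(2) by (intro sum.cong refl) (simp add: less_imp_neq[symmetric])
  also have "(\<Sum>j\<in>A. \<tau> j * (cmod (y j) / \<tau> j))^2 \<le> (\<Sum>j\<in>A. \<tau> j) * (\<Sum>j\<in>A. \<tau> j * (cmod (y j) / \<tau> j)^2)"
    by (rule cs_real[OF assms(1,2)])
  also have "(\<Sum>j\<in>A. \<tau> j * (cmod (y j) / \<tau> j)^2) = (\<Sum>j\<in>A. (cmod (y j))^2 / \<tau> j)"
    using assms(2) by (intro sum.cong refl) (simp add: power2_eq_square less_imp_neq[symmetric])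
  finally show ?thesis using assms(3) by (simp add: divide_le_eq mult.commute)
qed

definition kmat :: "nat \<Rightarrow> 'j set \<Rightarrow> ('j \<Rightarrow> complex vec) \<Rightarrow> ('j \<Rightarrow> complex) \<Rightarrow> complex mat" where
  "kmat n S x c = mat n n (\<lambda>(p, q). \<Sum>i\<in>S. ketbra (x i) (x i) $$ (p, q) / c i)"

lemma kmat_dims[simp]: "dim_row (kmat n S x c) = n" "dim_col (kmat n S x c) = n"
  by (auto simp: kmat_def)

lemma kmat_carrier[simp]: "kmat n S x c \<in> carrier_mat n n"
  by (simp add: kmat_def)

lemma kmat_entry:
  assumes "\<And>i. i \<in> S \<Longrightarrow> x i \<in> carrier_vec n" "p < n" "q < n"
  shows "kmat n S x c $$ (p, q) = (\<Sum>i\<in>S. x i $ p * cnj (x i $ q) / c i)"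
proof -
  have "dim_vec (x i) = n" if "i \<in> S" for i using assms(1)[OF that] by simp
  then show ?thesis using assms(2,3) by (auto simp: kmat_def ketbra_def intro!: sum.cong)
qed

lemma kmat_herm:
  assumes "\<And>i. i \<in> S \<Longrightarrow> x i \<in> carrier_vec n" "\<And>i. i \<in> S \<Longrightarrow> Im (c i) = 0"
  shows "hermitian_mat n (kmat n S x c)"
proof -
  have cc: "cnj (c i) = c i" if "i \<in> S" for i using assms(2)[OF that] by (simp add: complex_eq_iff)
  have "cadj (kmat n S x c) = kmat n S x c"
  proof (rule eq_matI)
    fix p q assume "p < dim_row (kmat n S x c)" "q < dim_col (kmat n S x c)"
    then have pq: "p < n" "q < n" by (auto simp: kmat_def)
    have "cadj (kmat n S x c) $$ (p, q) = cnj (kmat n S x c $$ (q, p))" using pq by (simp add: cadj_def)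
    also have "\<dots> = (\<Sum>i\<in>S. x i $ p * cnj (x i $ q) / c i)"
      using pq by (simp add: kmat_entry[OF assms(1)] cnj_sum cc mult.commute)
    also have "\<dots> = kmat n S x c $$ (p, q)" using pq by (simp add: kmat_entry[OF assms(1)])
    finally show "cadj (kmat n S x c) $$ (p, q) = kmat n S x c $$ (p, q)" .
  qed (auto simp: cadj_def)
  then show ?thesis by (simp add: hermitian_mat_def)
qed

lemma kmat_form:
  assumes "finite S" "\<And>i. i \<in> S \<Longrightarrow> x i \<in> carrier_vec n" "v \<in> carrier_vec n"
  shows "cinner v (kmat n S x c *\<^sub>v v) = (\<Sum>i\<in>S. cnj (cinner (x i) v) * cinner (x i) v / c i)"
proof -
  have "cinner v (kmat n S x c *\<^sub>v v) = (\<Sum>p<n. \<Sum>q<n. cnj (v $ p) * kmat n S x c $$ (p, q) * v $ q)"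
    by (rule qform_expand[OF assms(3)]) simp
  also have "\<dots> = (\<Sum>p<n. \<Sum>q<n. \<Sum>i\<in>S. (cnj (v $ p) * x i $ p) * (cnj (x i $ q) * v $ q) / c i)"
    by (intro sum.cong refl) (simp add: kmat_entry[OF assms(2)] sum_distrib_left sum_distrib_right mult_ac)
  also have "\<dots> = (\<Sum>i\<in>S. (\<Sum>p<n. cnj (v $ p) * x i $ p) * (\<Sum>q<n. cnj (x i $ q) * v $ q) / c i)"
  proof -
    have "(\<Sum>p<n. \<Sum>q<n. \<Sum>i\<in>S. (cnj (v $ p) * x i $ p) * (cnj (x i $ q) * v $ q) / c i)
        = (\<Sum>p<n. \<Sum>i\<in>S. \<Sum>q<n. (cnj (v $ p) * x i $ p) * (cnj (x i $ q) * v $ q) / c i)"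
      by (intro sum.cong refl) (rule sum.swap)
    also have "\<dots> = (\<Sum>i\<in>S. \<Sum>p<n. \<Sum>q<n. (cnj (v $ p) * x i $ p) * (cnj (x i $ q) * v $ q) / c i)"
      by (rule sum.swap)
    also have "\<dots> = (\<Sum>i\<in>S. (\<Sum>p<n. cnj (v $ p) * x i $ p) * (\<Sum>q<n. cnj (x i $ q) * v $ q) / c i)"
      by (intro sum.cong refl) (simp add: sum_product sum_divide_distrib)
    finally show ?thesis .
  qed
  also have "\<dots> = (\<Sum>i\<in>S. cnj (cinner (x i) v) * cinner (x i) v / c i)"
  proof (intro sum.cong refl)
    fix i assume i: "i \<in> S"
    then have "dim_vec (x i) = n" using assms(2) by simp
    then show "(\<Sum>p<n. cnj (v $ p) * x i $ p) * (\<Sum>q<n. cnj (x i $ q) * v $ q) / c i =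
         cnj (cinner (x i) v) * cinner (x i) v / c i"
      by (simp add: cinner_def cnj_sum mult.commute)
  qed
  finally show ?thesis .
qed

lemma kmat_trace:
  assumes "\<And>i. i \<in> S \<Longrightarrow> x i \<in> carrier_vec n"
  shows "mtrace (kmat n S x c) = (\<Sum>i\<in>S. cinner (x i) (x i) / c i)"
proof -
  have "mtrace (kmat n S x c) = (\<Sum>p<n. \<Sum>i\<in>S. x i $ p * cnj (x i $ p) / c i)"
    by (simp add: mtrace_carrier[OF kmat_carrier] kmat_entry[OF assms])
  also have "\<dots> = (\<Sum>i\<in>S. \<Sum>p<n. x i $ p * cnj (x i $ p) / c i)" by (rule sum.swap)
  also have "\<dots> = (\<Sum>i\<in>S. cinner (x i) (x i) / c i)"
  proof (intro sum.cong refl)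
    fix i assume i: "i \<in> S"
    then have "dim_vec (x i) = n" using assms by simp
    then show "(\<Sum>p<n. x i $ p * cnj (x i $ p) / c i) = cinner (x i) (x i) / c i"
      by (simp add: cinner_def sum_divide_distrib mult.commute)
  qed
  finally show ?thesis .
qed

lemma sum_div_mod:
  fixes d :: nat and f :: "nat \<Rightarrow> nat \<Rightarrow> 'x :: comm_monoid_add"
  shows "(\<Sum>k<d * d. f (k div d) (k mod d)) = (\<Sum>a<d. \<Sum>b<d. (f a b :: 'x :: comm_monoid_add))"
proof -
  have lt: "a * d + b < d * d" if "a < d" "b < d" for a b :: nat
  proof -
    have "a * d + b < a * d + d" using that by simp
    also have "\<dots> = Suc a * d" by simp
    also have "\<dots> \<le> d * d" using that by (intro mult_le_mono1) simp
    finally show ?thesis .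
  qed
  have "(\<Sum>k<d * d. f (k div d) (k mod d)) = (\<Sum>(a, b)\<in>{..<d} \<times> {..<d}. f a b)"
  proof (rule sum.reindex_bij_witness[where j = "\<lambda>k. (k div d, k mod d)" and i = "\<lambda>(a, b). a * d + b"])
    fix k assume "k \<in> {..<d * d}"
    then show "(case (k div d, k mod d) of (a, b) \<Rightarrow> a * d + b) = k" by simp
    show "(k div d, k mod d) \<in> {..<d} \<times> {..<d}" using \<open>k \<in> {..<d * d}\<close>
      by (cases "d = 0") (auto simp: less_mult_imp_div_less)
    show "(case (k div d, k mod d) of (a, b) \<Rightarrow> f a b) = f (k div d) (k mod d)" by simp
  next
    fix x assume x: "x \<in> {..<d} \<times> {..<d}"
    then obtain a b where ab: "x = (a, b)" "a < d" "b < d" by auto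
    then show "(case x of (a, b) \<Rightarrow> a * d + b) \<in> {..<d * d}" using lt by auto
    show "((case x of (a, b) \<Rightarrow> a * d + b) div d, (case x of (a, b) \<Rightarrow> a * d + b) mod d) = x"
      using ab by simp
  qed
  also have "\<dots> = (\<Sum>a<d. \<Sum>b<d. f a b)" by (simp add: sum.cartesian_product)
  finally show ?thesis .
qed

lemma vectorize_carrier[simp]: "vectorize d P \<in> carrier_vec (d * d)"
  by (simp add: vectorize_def)

lemma cinner_vectorize:
  "cinner (vectorize d P) v = (\<Sum>a<d. \<Sum>b<d. cnj (P $$ (a, b)) * v $ (a * d + b))"
proof -
  have "cinner (vectorize d P) v = (\<Sum>k<d * d. cnj (P $$ (k div d, k mod d)) * v $ ((k div d) * d + k mod d))"
    by (simp add: cinner_def vectorize_def)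
  also have "\<dots> = (\<Sum>a<d. \<Sum>b<d. cnj (P $$ (a, b)) * v $ (a * d + b))"
    by (rule sum_div_mod[where f = "\<lambda>a b. cnj (P $$ (a, b)) * v $ (a * d + b)"])
  finally show ?thesis .
qed

lemma hermitian_minus:
  assumes "hermitian_mat n A" "hermitian_mat n B"
  shows "hermitian_mat n (A - B)"
proof -
  have c: "A \<in> carrier_mat n n" "B \<in> carrier_mat n n" "cadj A = A" "cadj B = B"
    using assms by (auto simp: hermitian_mat_def)
  have "cadj (A - B) = A - B"
  proof (rule eq_matI)
    fix i j assume "i < dim_row (A - B)" "j < dim_col (A - B)"
    then have ij: "i < n" "j < n" using c by auto
    have "cadj (A - B) $$ (i, j) = cnj (A $$ (j, i)) - cnj (B $$ (j, i))" using ij c by (simp add: cadj_def)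
    also have "\<dots> = cadj A $$ (i, j) - cadj B $$ (i, j)" using ij c(1,2) by (simp add: cadj_def)
    also have "\<dots> = (A - B) $$ (i, j)" using ij c by simp
    finally show "cadj (A - B) $$ (i, j) = (A - B) $$ (i, j)" .
  qed (use c in \<open>auto simp: cadj_def\<close>)
  then show ?thesis using c minus_carrier_mat[OF c(2), of A] by (simp add: hermitian_mat_def)
qed

lemma cinner_minus_mat:
  assumes "A \<in> carrier_mat n n" "B \<in> carrier_mat n n" "v \<in> carrier_vec n"
  shows "cinner v ((A - B) *\<^sub>v v) = cinner v (A *\<^sub>v v) - cinner v (B *\<^sub>v v)"
proof -
  have "cinner v ((A - B) *\<^sub>v v) = (\<Sum>a<n. \<Sum>b<n. cnj (v $ a) * (A - B) $$ (a, b) * v $ b)"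
    by (rule qform_expand[OF assms(3)]) (rule minus_carrier_mat[OF assms(2)])
  also have "\<dots> = (\<Sum>a<n. \<Sum>b<n. cnj (v $ a) * A $$ (a, b) * v $ b - cnj (v $ a) * B $$ (a, b) * v $ b)"
    using assms by (intro sum.cong refl) (simp add: algebra_simps)
  also have "\<dots> = cinner v (A *\<^sub>v v) - cinner v (B *\<^sub>v v)"
    by (simp add: sum_subtractf qform_expand[OF assms(3) assms(1)] qform_expand[OF assms(3) assms(2)])
  finally show ?thesis .
qed



lemma G_mat_kmat:
  "G_mat d \<Psi> e = kmat (d * d) {i. i < d \<and> mtrace (hs_adjoint d \<Psi> (ketbra (e i) (e i))) \<noteq> 0}
     (\<lambda>i. vectorize d (hs_adjoint d \<Psi> (ketbra (e i) (e i)))) (\<lambda>i. mtrace (hs_adjoint d \<Psi> (ketbra (e i) (e i))))"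
  by (simp add: G_mat_def kmat_def Let_def)

lemma mtrace_unit: "r < d \<Longrightarrow> mtrace (mat_unit d r r) = 1"
  by (simp add: mtrace_def mat_unit_def)

lemma re_ratio:
  assumes "c = complex_of_real \<tau>"
  shows "Re (cnj y * y / c) = (cmod y)^2 / \<tau>"
proof -
  have "cnj y * y = complex_of_real ((cmod y)^2)" using complex_norm_square[of y] by (simp add: mult.commute)
  then show ?thesis using assms by (simp flip: of_real_divide)
qed

lemma total_trace:
  assumes d: "d \<ge> 1" and onb: "\<forall>i<N. orthonormal_basis d (e i)" and N: "0 < N"
    and lin: "linear_op_map d (d ^ N) \<Lambda>"
    and ch0: "quantum_channel d d \<Psi>"
    and comp: "\<forall>X\<in>carrier_mat d d. \<Psi> X = ptrace_keep d N 0 (\<Lambda> X)"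
  shows "(\<Sum>j\<in>PiE {..<N} (\<lambda>_. {..<d}). mtrace (hs_adjoint d \<Lambda> (ketbra (tvec d N e j) (tvec d N e j)))) = of_nat d"
proof -
  define JJ where "JJ = PiE {..<N} (\<lambda>_. {..<d})"
  define B where "B j = hs_adjoint d \<Lambda> (ketbra (tvec d N e j) (tvec d N e j))" for j
  define A where "A a = hs_adjoint d \<Psi> (ketbra (e 0 a) (e 0 a))" for a
  have fin: "finite JJ" by (simp add: JJ_def finite_PiE)
  have j0: "j 0 < d" if "j \<in> JJ" for j using that N by (auto simp: JJ_def PiE_def Pi_def)
  have marg: "A a $$ (r, r) = (\<Sum>j\<in>JJ. (if j 0 = a then 1 else 0) * B j $$ (r, r))" if "a < d" "r < d" for a r
    unfolding A_def B_def JJ_def by (rule marginal[OF d onb N that(1) that(2) that(2) lin comp])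
  have e0: "e 0 a \<in> carrier_vec d" if "a < d" for a using onb N that by (auto simp: orthonormal_basis_def)
  have lin0: "linear_op_map d d \<Psi>" using ch0 by (simp add: quantum_channel_def)
  have tp0: "trace_preserving d \<Psi>" using ch0 by (simp add: quantum_channel_def)
  have EC: "mat_unit d r s \<in> carrier_mat d d" for r s by (simp add: mat_unit_def)
  have PC: "\<Psi> (mat_unit d r s) \<in> carrier_mat d d" for r s using lin0 EC by (simp add: linear_op_map_def)
  have sumA: "(\<Sum>a<d. A a $$ (r, r)) = 1" if r: "r < d" for r
  proof -
    have "(\<Sum>a<d. A a $$ (r, r)) = (\<Sum>a<d. \<Sum>p<d. \<Sum>q<d. cnj (\<Psi> (mat_unit d r r) $$ (q, p)) * (e 0 a $ q * cnj (e 0 a $ p)))"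
    proof (rule sum.cong[OF refl])
      fix a assume a: "a \<in> {..<d}"
      have dv: "dim_vec (e 0 a) = d" using e0 a by auto
      have kc: "ketbra (e 0 a) (e 0 a) \<in> carrier_mat d d" using dv by (simp add: ketbra_def)
      have "A a $$ (r, r) = (\<Sum>p<d. \<Sum>q<d. cnj (\<Psi> (mat_unit d r r) $$ (q, p)) * ketbra (e 0 a) (e 0 a) $$ (q, p))"
        using r by (simp add: A_def hs_adjoint_entry mtrace_adj_mult[OF PC kc])
      also have "\<dots> = (\<Sum>p<d. \<Sum>q<d. cnj (\<Psi> (mat_unit d r r) $$ (q, p)) * (e 0 a $ q * cnj (e 0 a $ p)))"
        using dv by (intro sum.cong refl) (auto simp: ketbra_def)
      finally show "A a $$ (r, r) = (\<Sum>p<d. \<Sum>q<d. cnj (\<Psi> (mat_unit d r r) $$ (q, p)) * (e 0 a $ q * cnj (e 0 a $ p)))" .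
    qed
    also have "\<dots> = (\<Sum>p<d. \<Sum>q<d. cnj (\<Psi> (mat_unit d r r) $$ (q, p)) * (\<Sum>a<d. e 0 a $ q * cnj (e 0 a $ p)))"
    proof -
      have "(\<Sum>a<d. \<Sum>p<d. \<Sum>q<d. cnj (\<Psi> (mat_unit d r r) $$ (q, p)) * (e 0 a $ q * cnj (e 0 a $ p)))
        = (\<Sum>p<d. \<Sum>a<d. \<Sum>q<d. cnj (\<Psi> (mat_unit d r r) $$ (q, p)) * (e 0 a $ q * cnj (e 0 a $ p)))"
        by (rule sum.swap)
      also have "\<dots> = (\<Sum>p<d. \<Sum>q<d. \<Sum>a<d. cnj (\<Psi> (mat_unit d r r) $$ (q, p)) * (e 0 a $ q * cnj (e 0 a $ p)))"
        by (rule sum.cong[OF refl], rule sum.swap)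
      finally show ?thesis by (simp only: sum_distrib_left)
    qed
    also have "\<dots> = (\<Sum>p<d. \<Sum>q<d. cnj (\<Psi> (mat_unit d r r) $$ (q, p)) * (if q = p then 1 else 0))"
      using onb N by (intro sum.cong refl) (simp add: onb_complete)
    also have "\<dots> = (\<Sum>p<d. cnj (\<Psi> (mat_unit d r r) $$ (p, p)))"
      by (intro sum.cong refl) (simp add: sum_delta_mult[where f = "\<lambda>q. cnj (\<Psi> (mat_unit d r r) $$ (q, _))"])
    also have "\<dots> = cnj (mtrace (\<Psi> (mat_unit d r r)))"
      using PC by (simp add: mtrace_carrier[OF PC] cnj_sum)
    also have "\<dots> = 1" using tp0 EC r by (simp add: trace_preserving_def mtrace_unit)
    finally show ?thesis .
  qed
  have "(\<Sum>j\<in>JJ. mtrace (B j)) = (\<Sum>j\<in>JJ. \<Sum>r<d. B j $$ (r, r))"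
    by (simp add: B_def mtrace_carrier[OF hs_adjoint_carrier])
  also have "\<dots> = (\<Sum>j\<in>JJ. \<Sum>r<d. \<Sum>a<d. (if j 0 = a then 1 else 0) * B j $$ (r, r))"
  proof (intro sum.cong refl)
    fix j r assume "j \<in> JJ"
    then have jd: "j 0 < d" using j0 by simp
    have "(\<Sum>a<d. (if j 0 = a then 1 else 0) * B j $$ (r, r)) = (\<Sum>a<d. if j 0 = a then B j $$ (r, r) else 0)"
      by (rule sum.cong) auto
    then have "(\<Sum>a<d. (if j 0 = a then 1 else 0) * B j $$ (r, r)) = B j $$ (r, r)"
      using jd by simp
    then show "B j $$ (r, r) = (\<Sum>a<d. (if j 0 = a then 1 else 0) * B j $$ (r, r))" by simp
  qed
  also have "\<dots> = (\<Sum>r<d. \<Sum>a<d. \<Sum>j\<in>JJ. (if j 0 = a then 1 else 0) * B j $$ (r, r))"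
    by (subst sum.swap, rule sum.cong[OF refl], rule sum.swap)
  also have "\<dots> = (\<Sum>r<d. \<Sum>a<d. A a $$ (r, r))"
    using marg by simp
  also have "\<dots> = (\<Sum>r<d. 1)" using sumA by simp
  finally show ?thesis by (simp add: JJ_def B_def)
qed



lemma idx_lt: "a < d \<Longrightarrow> b < d \<Longrightarrow> a * d + b < d * (d::nat)"
proof -
  assume that: "a < d" "b < d"
  have "a * d + b < a * d + d" using that by simp
  also have "\<dots> = Suc a * d" by simp
  also have "\<dots> \<le> d * d" using that by (intro mult_le_mono1) simp
  finally show ?thesis .
qed

lemma vectorize_index: "a < d \<Longrightarrow> b < d \<Longrightarrow> vectorize d P $ (a * d + b) = P $$ (a, b)"
  using idx_lt[of a d b] by (simp add: vectorize_def)

definition Bm :: "nat \<Rightarrow> nat \<Rightarrow> (nat \<Rightarrow> nat \<Rightarrow> complex vec) \<Rightarrow> (complex mat \<Rightarrow> complex mat) \<Rightarrow> (nat \<Rightarrow> nat) \<Rightarrow> complex mat" where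
  "Bm d N e \<Lambda> j = hs_adjoint d \<Lambda> (ketbra (tvec d N e j) (tvec d N e j))"

definition Sset :: "nat \<Rightarrow> nat \<Rightarrow> (nat \<Rightarrow> nat \<Rightarrow> complex vec) \<Rightarrow> (complex mat \<Rightarrow> complex mat) \<Rightarrow> (nat \<Rightarrow> nat) set" where
  "Sset d N e \<Lambda> = {j \<in> PiE {..<N} (\<lambda>_. {..<d}). mtrace (Bm d N e \<Lambda> j) \<noteq> 0}"

definition Hm :: "nat \<Rightarrow> nat \<Rightarrow> (nat \<Rightarrow> nat \<Rightarrow> complex vec) \<Rightarrow> (complex mat \<Rightarrow> complex mat) \<Rightarrow> complex mat" where
  "Hm d N e \<Lambda> = kmat (d * d) (Sset d N e \<Lambda>) (\<lambda>j. vectorize d (Bm d N e \<Lambda> j)) (\<lambda>j. mtrace (Bm d N e \<Lambda> j))"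

lemma Sset_finite: "finite (Sset d N e \<Lambda>)"
  by (rule finite_subset[of _ "PiE {..<N} (\<lambda>_. {..<d})"]) (auto simp: Sset_def finite_PiE)

lemma Bm_qpos:
  assumes "quantum_channel d (d ^ N) \<Lambda>"
  shows "qpos d (Bm d N e \<Lambda> j)"
  unfolding Bm_def
  by (rule B_qpos) (use assms in \<open>auto simp: quantum_channel_def\<close>)

lemma Hm_herm:
  assumes "quantum_channel d (d ^ N) \<Lambda>"
  shows "hermitian_mat (d * d) (Hm d N e \<Lambda>)"
  unfolding Hm_def by (rule kmat_herm) (auto simp: qpos_trace(1)[OF Bm_qpos[OF assms]])

lemma Bm_trace_real:
  assumes "quantum_channel d (d ^ N) \<Lambda>"
  shows "mtrace (Bm d N e \<Lambda> j) = complex_of_real (Re (mtrace (Bm d N e \<Lambda> j)))"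
    "0 \<le> Re (mtrace (Bm d N e \<Lambda> j))"
  using qpos_trace[OF Bm_qpos[OF assms]] by auto

lemma Hm_trace:
  assumes d: "d \<ge> 1" and onb: "\<forall>i<N. orthonormal_basis d (e i)" and N: "0 < N"
    and ch: "quantum_channel d (d ^ N) \<Lambda>"
    and ch0: "quantum_channel d d \<Psi>"
    and comp: "\<forall>X\<in>carrier_mat d d. \<Psi> X = ptrace_keep d N 0 (\<Lambda> X)"
  shows "Re (mtrace (Hm d N e \<Lambda>)) \<le> real d"
proof -
  let ?B = "Bm d N e \<Lambda>"
  let ?S = "Sset d N e \<Lambda>"
  let ?JJ = "PiE {..<N} (\<lambda>_. {..<d})"
  have lin: "linear_op_map d (d ^ N) \<Lambda>" using ch by (simp add: quantum_channel_def)
  have "mtrace (Hm d N e \<Lambda>) = (\<Sum>j\<in>?S. cinner (vectorize d (?B j)) (vectorize d (?B j)) / mtrace (?B j))"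
    unfolding Hm_def by (rule kmat_trace) simp
  then have "Re (mtrace (Hm d N e \<Lambda>)) = (\<Sum>j\<in>?S. Re (cinner (vectorize d (?B j)) (vectorize d (?B j)) / mtrace (?B j)))"
    by (simp add: Re_sum)
  also have "\<dots> \<le> (\<Sum>j\<in>?S. Re (mtrace (?B j)))"
  proof (rule sum_mono)
    fix j assume j: "j \<in> ?S"
    define \<tau> where "\<tau> = Re (mtrace (?B j))"
    have t: "mtrace (?B j) = complex_of_real \<tau>" unfolding \<tau>_def by (rule Bm_trace_real(1)[OF ch])
    have "mtrace (?B j) \<noteq> 0" using j by (simp add: Sset_def)
    then have tpos: "\<tau> > 0" using t Bm_trace_real(2)[OF ch, of e j] unfolding \<tau>_def[symmetric] by auto
    have "cinner (vectorize d (?B j)) (vectorize d (?B j)) = (\<Sum>a<d. \<Sum>b<d. cnj (?B j $$ (a, b)) * ?B j $$ (a, b))"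
      by (subst cinner_vectorize) (intro sum.cong refl, simp add: vectorize_index)
    also have "\<dots> = (\<Sum>a<d. \<Sum>b<d. complex_of_real ((cmod (?B j $$ (a, b)))^2))"
      by (intro sum.cong refl) (metis complex_norm_square mult.commute)
    also have "\<dots> = complex_of_real (\<Sum>a<d. \<Sum>b<d. (cmod (?B j $$ (a, b)))^2)"
      by (simp only: of_real_sum)
    finally have "Re (cinner (vectorize d (?B j)) (vectorize d (?B j)) / mtrace (?B j)) = (\<Sum>a<d. \<Sum>b<d. (cmod (?B j $$ (a, b)))^2) / \<tau>"
      using t by (simp flip: of_real_divide)
    also have "\<dots> \<le> \<tau>^2 / \<tau>"
      using qpos_frob[OF Bm_qpos[OF ch]] tpos \<tau>_def by (intro divide_right_mono) auto
    also have "\<dots> = \<tau>" by (simp add: power2_eq_square)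
    finally show "Re (cinner (vectorize d (?B j)) (vectorize d (?B j)) / mtrace (?B j)) \<le> Re (mtrace (?B j))"
      using \<tau>_def by simp
  qed
  also have "\<dots> \<le> (\<Sum>j\<in>?JJ. Re (mtrace (?B j)))"
    by (rule sum_mono2) (auto simp: finite_PiE Sset_def Bm_trace_real(2)[OF ch])
  also have "\<dots> = Re (\<Sum>j\<in>?JJ. mtrace (?B j))" by (simp add: Re_sum)
  also have "(\<Sum>j\<in>?JJ. mtrace (?B j)) = of_nat d"
    unfolding Bm_def by (rule total_trace[OF d onb N lin ch0 comp])
  finally show ?thesis by simp
qed



lemma cnj_ind: "cnj (if P then 1 else 0) = (if P then 1 else 0)"
  by simp

lemma Hm_loewner:
  assumes d: "d \<ge> 1" and onb: "\<forall>i<N. orthonormal_basis d (e i)" and k: "k < N"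
    and ch: "quantum_channel d (d ^ N) \<Lambda>"
    and comp: "\<forall>X\<in>carrier_mat d d. \<Psi> X = ptrace_keep d N k (\<Lambda> X)"
  shows "loewner_ge (d * d) (Hm d N e \<Lambda>) (G_mat d \<Psi> (e k))"
proof -
  define B where "B = Bm d N e \<Lambda>"
  define S where "S = Sset d N e \<Lambda>"
  define JJ where "JJ = PiE {..<N} (\<lambda>_. {..<d})"
  define A where "A a = hs_adjoint d \<Psi> (ketbra (e k a) (e k a))" for a
  define Sg where "Sg = {a. a < d \<and> mtrace (A a) \<noteq> 0}"
  define Sa where "Sa a = {j \<in> S. j k = a}" for a
  define \<tau> where "\<tau> j = Re (mtrace (B j))" for j
  have lin: "linear_op_map d (d ^ N) \<Lambda>" using ch by (simp add: quantum_channel_def)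
  have finJJ: "finite JJ" by (simp add: JJ_def finite_PiE)
  have SJJ: "S \<subseteq> JJ" by (auto simp: S_def JJ_def Sset_def)
  have finS: "finite S" using finite_subset[OF SJJ finJJ] .
  have finSa: "finite (Sa a)" for a using finS by (simp add: Sa_def)
  have Bq: "qpos d (B j)" for j unfolding B_def by (rule Bm_qpos[OF ch])
  have tB: "mtrace (B j) = complex_of_real (\<tau> j)" for j unfolding \<tau>_def B_def by (rule Bm_trace_real(1)[OF ch])
  have tnn: "0 \<le> \<tau> j" for j unfolding \<tau>_def B_def by (rule Bm_trace_real(2)[OF ch])
  have tpos: "0 < \<tau> j" if "j \<in> S" for j
  proof -
    have "mtrace (B j) \<noteq> 0" using that by (simp add: S_def Sset_def B_def)
    then show ?thesis using tB[of j] tnn[of j] by auto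
  qed
  have jk: "j k < d" if "j \<in> JJ" for j using that k by (auto simp: JJ_def PiE_def Pi_def)
  have marg: "A a $$ (r, s) = (\<Sum>j\<in>JJ. (if j k = a then 1 else 0) * B j $$ (r, s))"
    if "a < d" "r < d" "s < d" for a r s
    unfolding A_def B_def JJ_def Bm_def by (rule marginal[OF d onb k that lin comp])
  have zeroB: "B j $$ (r, s) = 0" if "j \<in> JJ" "j \<notin> S" "r < d" "s < d" for j r s
  proof -
    have "mtrace (B j) = 0" using that by (simp add: S_def Sset_def B_def JJ_def)
    then show ?thesis using qpos_zero[OF Bq] that by blast
  qed
  have restr: "(\<Sum>j\<in>JJ. (if j k = a then 1 else 0) * f j) = (\<Sum>j\<in>Sa a. f j)"
    if "\<And>j. j \<in> JJ \<Longrightarrow> j \<notin> S \<Longrightarrow> f j = 0" for a and f :: "(nat \<Rightarrow> nat) \<Rightarrow> complex"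
  proof -
    have "(\<Sum>j\<in>JJ. (if j k = a then 1 else 0) * f j) = (\<Sum>j\<in>S. (if j k = a then 1 else 0) * f j)"
      by (rule sum.mono_neutral_right[OF finJJ SJJ]) (use that in auto)
    also have "\<dots> = (\<Sum>j\<in>S. if j k = a then f j else 0)" by (rule sum.cong) auto
    also have "\<dots> = (\<Sum>j\<in>Sa a. f j)" using finS by (simp add: sum.inter_filter Sa_def)
    finally show ?thesis .
  qed
  have sig: "mtrace (A a) = complex_of_real (\<Sum>j\<in>Sa a. \<tau> j)" if a: "a < d" for a
  proof -
    have "mtrace (A a) = (\<Sum>r<d. A a $$ (r, r))" by (simp add: A_def mtrace_carrier[OF hs_adjoint_carrier])
    also have "\<dots> = (\<Sum>r<d. \<Sum>j\<in>JJ. (if j k = a then 1 else 0) * B j $$ (r, r))"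
      using a marg by simp
    also have "\<dots> = (\<Sum>j\<in>JJ. (if j k = a then 1 else 0) * mtrace (B j))"
      by (subst sum.swap) (simp add: sum_distrib_left B_def mtrace_carrier[OF hs_adjoint_carrier] Bm_def)
    also have "\<dots> = (\<Sum>j\<in>Sa a. mtrace (B j))"
      by (rule restr) (simp add: S_def Sset_def B_def JJ_def)
    also have "\<dots> = complex_of_real (\<Sum>j\<in>Sa a. \<tau> j)" by (simp add: tB)
    finally show ?thesis .
  qed
  have Gk: "G_mat d \<Psi> (e k) = kmat (d * d) Sg (\<lambda>a. vectorize d (A a)) (\<lambda>a. mtrace (A a))"
    by (simp add: G_mat_kmat A_def Sg_def)
  have Hk: "Hm d N e \<Lambda> = kmat (d * d) S (\<lambda>j. vectorize d (B j)) (\<lambda>j. mtrace (B j))"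
    by (simp add: Hm_def S_def B_def)
  have Hh: "hermitian_mat (d * d) (Hm d N e \<Lambda>)" by (rule Hm_herm[OF ch])
  have Gh: "hermitian_mat (d * d) (G_mat d \<Psi> (e k))"
    unfolding Gk by (rule kmat_herm) (auto simp: Sg_def sig)
  have form: "0 \<le> Re (cinner v ((Hm d N e \<Lambda> - G_mat d \<Psi> (e k)) *\<^sub>v v))" if v: "v \<in> carrier_vec (d * d)" for v
  proof -
    define y where "y j = cinner (vectorize d (B j)) v" for j
    define z where "z a = cinner (vectorize d (A a)) v" for a
    have yzero: "y j = 0" if "j \<in> JJ" "j \<notin> S" for j
      unfolding y_def cinner_vectorize using zeroB[OF that] by simp
    have zy: "z a = (\<Sum>j\<in>Sa a. y j)" if a: "a < d" for a
    proof -
      have "z a = (\<Sum>r<d. \<Sum>s<d. cnj (A a $$ (r, s)) * v $ (r * d + s))"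
        by (simp add: z_def cinner_vectorize)
      also have "\<dots> = (\<Sum>r<d. \<Sum>s<d. \<Sum>j\<in>JJ. (if j k = a then 1 else 0) * (cnj (B j $$ (r, s)) * v $ (r * d + s)))"
        by (intro sum.cong refl) (simp add: marg a cnj_sum cnj_ind sum_distrib_right sum_distrib_left mult_ac)
      also have "\<dots> = (\<Sum>j\<in>JJ. (if j k = a then 1 else 0) * y j)"
      proof -
        have "(\<Sum>r<d. \<Sum>s<d. \<Sum>j\<in>JJ. (if j k = a then 1 else 0) * (cnj (B j $$ (r, s)) * v $ (r * d + s)))
            = (\<Sum>j\<in>JJ. \<Sum>r<d. \<Sum>s<d. (if j k = a then 1 else 0) * (cnj (B j $$ (r, s)) * v $ (r * d + s)))"
          by (subst sum.swap, rule sum.cong[OF refl], rule sum.swap)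
        also have "\<dots> = (\<Sum>j\<in>JJ. (if j k = a then 1 else 0) * y j)"
          by (intro sum.cong refl) (simp add: y_def cinner_vectorize sum_distrib_left)
        finally show ?thesis .
      qed
      also have "\<dots> = (\<Sum>j\<in>Sa a. y j)" by (rule restr) (simp add: yzero)
      finally show ?thesis .
    qed
    have Hf: "Re (cinner v (Hm d N e \<Lambda> *\<^sub>v v)) = (\<Sum>j\<in>S. (cmod (y j))^2 / \<tau> j)"
      unfolding Hk by (simp add: kmat_form[OF finS _ v] Re_sum y_def re_ratio[OF tB])
    also have "\<dots> = (\<Sum>a<d. \<Sum>j\<in>Sa a. (cmod (y j))^2 / \<tau> j)"
      unfolding Sa_def by (rule sum.group[symmetric]) (use finS SJJ jk in auto)
    finally have Hf: "Re (cinner v (Hm d N e \<Lambda> *\<^sub>v v)) = (\<Sum>a<d. \<Sum>j\<in>Sa a. (cmod (y j))^2 / \<tau> j)" .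
    have finSg: "finite Sg" by (simp add: Sg_def)
    have "cinner v (G_mat d \<Psi> (e k) *\<^sub>v v) = (\<Sum>a\<in>Sg. cnj (z a) * z a / mtrace (A a))"
      unfolding Gk by (simp add: kmat_form[OF finSg _ v] z_def)
    then have "Re (cinner v (G_mat d \<Psi> (e k) *\<^sub>v v)) = (\<Sum>a\<in>Sg. Re (cnj (z a) * z a / mtrace (A a)))"
      by (simp add: Re_sum)
    also have "\<dots> = (\<Sum>a\<in>Sg. (cmod (z a))^2 / (\<Sum>j\<in>Sa a. \<tau> j))"
    proof (rule sum.cong[OF refl])
      fix a assume "a \<in> Sg"
      then have "mtrace (A a) = complex_of_real (\<Sum>j\<in>Sa a. \<tau> j)" using sig by (simp add: Sg_def)
      then show "Re (cnj (z a) * z a / mtrace (A a)) = (cmod (z a))^2 / (\<Sum>j\<in>Sa a. \<tau> j)"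
        by (rule re_ratio)
    qed
    also have "\<dots> \<le> (\<Sum>a\<in>Sg. \<Sum>j\<in>Sa a. (cmod (y j))^2 / \<tau> j)"
    proof (rule sum_mono)
      fix a assume a: "a \<in> Sg"
      have pos: "0 < (\<Sum>j\<in>Sa a. \<tau> j)"
      proof -
        have m: "mtrace (A a) \<noteq> 0" "a < d" using a by (auto simp: Sg_def)
        then have "complex_of_real (\<Sum>j\<in>Sa a. \<tau> j) \<noteq> 0" using sig[OF m(2)] by metis
        then have "(\<Sum>j\<in>Sa a. \<tau> j) \<noteq> 0" by (metis of_real_0)
        moreover have "0 \<le> (\<Sum>j\<in>Sa a. \<tau> j)" by (intro sum_nonneg tnn)
        ultimately show ?thesis by simp
      qed
      show "(cmod (z a))^2 / (\<Sum>j\<in>Sa a. \<tau> j) \<le> (\<Sum>j\<in>Sa a. (cmod (y j))^2 / \<tau> j)"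
        using cs_complex[OF finSa tpos pos, of y] zy a by (auto simp: Sg_def Sa_def)
    qed
    also have "\<dots> \<le> (\<Sum>a<d. \<Sum>j\<in>Sa a. (cmod (y j))^2 / \<tau> j)"
      by (rule sum_mono2) (auto simp: Sg_def intro!: sum_nonneg divide_nonneg_nonneg tnn)
    finally have "Re (cinner v (G_mat d \<Psi> (e k) *\<^sub>v v)) \<le> Re (cinner v (Hm d N e \<Lambda> *\<^sub>v v))"
      using Hf by simp
    then show ?thesis
      by (simp add: cinner_minus_mat[OF _ _ v] Hk Gk)
  qed
  show ?thesis unfolding loewner_ge_def psd_mat_def
    using hermitian_minus[OF Hh Gh] form by (simp add: Hk Gk)
qed


theorem theorem4p7:
  fixes d N :: nat
    and \<Phi> :: "nat \<Rightarrow> complex mat \<Rightarrow> complex mat"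
    and e :: "nat \<Rightarrow> nat \<Rightarrow> complex vec"
  assumes "d \<ge> 1"
    and "\<forall>i < N. quantum_channel d d (\<Phi> i)"
    and "\<forall>i < N. orthonormal_basis d (e i)"
    and "\<exists>c > real d. \<forall>H. hermitian_mat (d * d) H \<and>
              (\<forall>i < N. loewner_ge (d * d) H (G_mat d (\<Phi> i) (e i)))
              \<longrightarrow> c \<le> Re (mtrace H)"
  shows "\<not> compatible d N \<Phi>"
proof
  assume "compatible d N \<Phi>"
  then obtain \<Lambda> where ch: "quantum_channel d (d ^ N) \<Lambda>"
    and mg: "\<forall>i<N. \<forall>X\<in>carrier_mat d d. \<Phi> i X = ptrace_keep d N i (\<Lambda> X)"
    by (auto simp: compatible_def)
  obtain c where c: "c > real d" and hyp: "\<forall>H. hermitian_mat (d * d) H \<and>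
              (\<forall>i < N. loewner_ge (d * d) H (G_mat d (\<Phi> i) (e i))) \<longrightarrow> c \<le> Re (mtrace H)"
    using assms(4) by blast
  show False
  proof (cases "N = 0")
    case True
    have "hermitian_mat (d * d) (0\<^sub>m (d * d) (d * d))"
      by (auto simp: hermitian_mat_def cadj_def intro!: eq_matI)
    then have "c \<le> Re (mtrace (0\<^sub>m (d * d) (d * d)))" using hyp True by auto
    moreover have "mtrace (0\<^sub>m (d * d) (d * d)) = 0" by (simp add: mtrace_def)
    ultimately show False using c by simp
  next
    case False
    then have N: "0 < N" by simp
    have "\<forall>i<N. loewner_ge (d * d) (Hm d N e \<Lambda>) (G_mat d (\<Phi> i) (e i))"
      using Hm_loewner[OF assms(1) assms(3) _ ch] mg by blast
    then have "c \<le> Re (mtrace (Hm d N e \<Lambda>))" using hyp Hm_herm[OF ch] by blast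
    moreover have "Re (mtrace (Hm d N e \<Lambda>)) \<le> real d"
      by (rule Hm_trace[OF assms(1) assms(3) N ch]) (use assms(2) mg N in auto)
    ultimately show False using c by simp
  qed
qed

end
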